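(* In the setting described in the context, assume $\omega_+\neq3\omega_-$, and let $r>0$, $0<\delta<1$ satisfy $$r^2S_*\leq1-\delta.$$ Then $\max_{\|\mathbf z\|\leq r}\|\nabla S\|\leq(1-\delta)r$; consequently $\Phi_{\rm nonres}=\Phi^1_S$ is well defined from $B_{\delta r}$ to $B_r$, and $$\|\Phi_{\rm nonres}(\mathbf z)-\mathbf z\|\leq r^3S_*\ \ (\mathbf z\in B_{\delta r}),\qquad \max_{\|\mathbf z\|\leq\delta r}|R|\leq R_\dagger r^6,$$ where $R:=\mathtt H\circ\Phi_{\rm nonres}-\mathtt N-\bar{\mathtt H}_4$ and $R_\dagger:=\sum_{j=1,2}S^{(j)}\big(2\bar{\mathtt H}_4^{(j)}+\hat{\mathtt G}^{(j)}\big)$ with $\hat{\mathtt G}:=\mathtt G-\bar{\mathtt H}_4$.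
   Context: Let $\mathtt M$ be a real symmetric positive-definite $2\times2$ matrix, $\mathtt K$ a real diagonal positive-definite $2\times 2$ matrix, and $M_3,N_3\in\mathbb R$. Let $\omega_-^2<\omega_+^2$ be the (distinct, positive) eigenvalues of $\mathtt M^{-1}\mathtt K$, $0<\omega_-<\omega_+$, $\boldsymbol\omega:=(\omega_-,\omega_+)$, and let $\mathbf\Phi=\begin{pmatrix}\phi_1^-&\phi_1^+\\ \phi_2^-&\phi_2^+\end{pmatrix}$ be real with $\mathbf\Phi^T\mathtt M\mathbf\Phi=\mathbf I$, $\mathbf\Phi^T\mathtt K\mathbf\Phi=\mathrm{diag}(\omega_-^2,\omega_+^2)$. Let $f(q_1,q_2)=\tfrac14M_3(\phi_1^-q_1+\phi_1^+q_2)^4+\tfrac14N_3(\phi_2^-q_1+\phi_2^+q_2)^4$. On $\mathbb C^2\ni\mathbf z$ set $\mathtt N=\omega_-|z_1|^2+\omega_+|z_2|^2$, $\mathtt G=f\big(\tfrac{z_1+\bar z_1}{\sqrt{2\omega_-}},\tfrac{z_2+\bar z_2}{\sqrt{2\omega_+}}\big)=\sum_{|\boldsymbol\alpha+\boldsymbol\beta|=4}\mathtt G_{\boldsymbol\alpha,\boldsymbol\beta}\mathbf z^{\boldsymbol\alpha}\bar{\mathbf z}^{\boldsymbol\beta}$ ($\boldsymbol\alpha,\boldsymbol\beta\in\mathbb N^2$, $\mathbf z^{\boldsymbol\alpha}=z_1^{\alpha_1}z_2^{\alpha_2}$, $|\boldsymbol\alpha+\boldsymbol\beta|=\alpha_1+\alpha_2+\beta_1+\beta_2$),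 $\mathtt H=\mathtt N+\mathtt G$, $\bar{\mathtt H}_4:=\sum_{|\boldsymbol\alpha|=2}\mathtt G_{\boldsymbol\alpha,\boldsymbol\alpha}|z_1|^{2\alpha_1}|z_2|^{2\alpha_2}$. $S$ is the quartic polynomial with coefficients $S_{\boldsymbol\alpha,\boldsymbol\beta}=\mathrm i\,\mathtt G_{\boldsymbol\alpha,\boldsymbol\beta}/(\boldsymbol\omega\cdot(\boldsymbol\alpha-\boldsymbol\beta))$ for $\boldsymbol\alpha\neq\boldsymbol\beta$, $0$ otherwise; $\Phi^t_S$ is the flow of $\dot z_j=-\mathrm i\partial_{\bar z_j}S$. For a quartic polynomial $P=\sum_{|\boldsymbol\alpha+\boldsymbol\beta|=4}P_{\boldsymbol\alpha,\boldsymbol\beta}\mathbf z^{\boldsymbol\alpha}\bar{\mathbf z}^{\boldsymbol\beta}$, $P^{(j)}:=\sum_{|\boldsymbol\alpha+\boldsymbol\beta|=4}\alpha_j|P_{\boldsymbol\alpha,\boldsymbol\beta}|$ ($j=1,2$) and $P_*:=\max\{P^{(1)},P^{(2)}\}$; in particular $S^{(j)}=\sum_{|\boldsymbol\alpha+\boldsymbol\beta|=4,\boldsymbol\alpha\ne\boldsymbol\beta}\alpha_j|\mathtt G_{\boldsymbol\alpha,\boldsymbol\beta}|/|\boldsymbol\omega\cdot(\boldsymbol\alpha-\boldsymbol\beta)|$ and $S_*=\max\{S^{(1)},S^{(2)}\}$. $\|\mathbf z\|:=\max\{|z_1|,|z_2|\}$, $B_\rho:=\{\|\mathbf z\|\leq\rho\}\subset\mathbb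 C^2$, $\nabla S$ is the gradient with respect to $(\mathbf z,\bar{\mathbf z})$ measured in the max norm. *)

theory Defs
  imports "HOL-Analysis.Analysis"
begin

text \<open>Points of C^2 are pairs (z1, z2). Multi-indices alpha, beta in N^2 are pairs of nats;
  a coefficient of a quartic polynomial in z, conj z is indexed by (alpha, beta).\<close>

type_synonym cpt = "complex \<times> complex"
type_synonym midx = "(nat \<times> nat) \<times> (nat \<times> nat)"

definition idx4 :: "midx set" where
  "idx4 = {((a1,a2),(b1,b2)). a1 + a2 + b1 + b2 = 4}"

definition cnj2 :: "cpt \<Rightarrow> cpt" where
  "cnj2 z = (cnj (fst z), cnj (snd z))"

definition mono :: "cpt \<Rightarrow> nat \<times> nat \<Rightarrow> complex" where
  "mono z a = fst z ^ fst a * snd z ^ snd a"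

definition znorm :: "cpt \<Rightarrow> real" where
  "znorm z = max (cmod (fst z)) (cmod (snd z))"

definition poly4 :: "(midx \<Rightarrow> complex) \<Rightarrow> cpt \<Rightarrow> complex" where
  "poly4 P z = (\<Sum>(a,b)\<in>idx4. P (a,b) * mono z a * mono (cnj2 z) b)"

definition comp :: "nat \<times> nat \<Rightarrow> nat \<Rightarrow> nat" where
  "comp a j = (if j = 1 then fst a else snd a)"

definition dec :: "nat \<times> nat \<Rightarrow> nat \<Rightarrow> nat \<times> nat" where
  "dec a j = (if j = 1 then (fst a - 1, snd a) else (fst a, snd a - 1))"

definition dz :: "(midx \<Rightarrow> complex) \<Rightarrow> nat \<Rightarrow> cpt \<Rightarrow> complex" where
  "dz P j z = (\<Sum>(a,b)\<in>idx4. P (a,b) * of_nat (comp a j) * mono z (dec a j) * mono (cnj2 z) b)"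

definition dzbar :: "(midx \<Rightarrow> complex) \<Rightarrow> nat \<Rightarrow> cpt \<Rightarrow> complex" where
  "dzbar P j z = (\<Sum>(a,b)\<in>idx4. P (a,b) * of_nat (comp b j) * mono z a * mono (cnj2 z) (dec b j))"

definition gradnorm :: "(midx \<Rightarrow> complex) \<Rightarrow> cpt \<Rightarrow> real" where
  "gradnorm P z = max (max (cmod (dz P 1 z)) (cmod (dz P 2 z)))
                      (max (cmod (dzbar P 1 z)) (cmod (dzbar P 2 z)))"

definition pnorm :: "(midx \<Rightarrow> complex) \<Rightarrow> nat \<Rightarrow> real" where
  "pnorm P j = (\<Sum>(a,b)\<in>idx4. real (comp a j) * cmod (P (a,b)))"

definition pstar :: "(midx \<Rightarrow> complex) \<Rightarrow> real" where
  "pstar P = max (pnorm P 1) (pnorm P 2)"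

definition Scoef :: "real \<Rightarrow> real \<Rightarrow> (midx \<Rightarrow> complex) \<Rightarrow> midx \<Rightarrow> complex" where
  "Scoef wm wp Gc ab = (if fst ab \<noteq> snd ab then
      \<i> * Gc ab / complex_of_real (wm * (real (fst (fst ab)) - real (fst (snd ab)))
                                 + wp * (real (snd (fst ab)) - real (snd (snd ab))))
     else 0)"

definition Sfield :: "(midx \<Rightarrow> complex) \<Rightarrow> cpt \<Rightarrow> cpt" where
  "Sfield Sc z = (- \<i> * dzbar Sc 1 z, - \<i> * dzbar Sc 2 z)"

definition flow_sol :: "(midx \<Rightarrow> complex) \<Rightarrow> cpt \<Rightarrow> (real \<Rightarrow> cpt) \<Rightarrow> bool" where
  "flow_sol Sc z x \<longleftrightarrow> x 0 = z \<and>
     (\<forall>t\<in>{0..1}. (x has_vector_derivative Sfield Sc (x t)) (at t within {0..1}))"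

definition fquart :: "real \<Rightarrow> real \<Rightarrow> real \<Rightarrow> real \<Rightarrow> real \<Rightarrow> real \<Rightarrow> complex \<Rightarrow> complex \<Rightarrow> complex" where
  "fquart M3 N3 p1m p1p p2m p2p q1 q2 =
     of_real M3 / 4 * (of_real p1m * q1 + of_real p1p * q2) ^ 4
   + of_real N3 / 4 * (of_real p2m * q1 + of_real p2p * q2) ^ 4"

definition Gfun :: "real \<Rightarrow> real \<Rightarrow> real \<Rightarrow> real \<Rightarrow> real \<Rightarrow> real \<Rightarrow> real \<Rightarrow> real \<Rightarrow> cpt \<Rightarrow> complex" where
  "Gfun M3 N3 p1m p1p p2m p2p wm wp z =
     fquart M3 N3 p1m p1p p2m p2p
       ((fst z + cnj (fst z)) / of_real (sqrt (2 * wm)))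
       ((snd z + cnj (snd z)) / of_real (sqrt (2 * wp)))"

definition Nfun :: "real \<Rightarrow> real \<Rightarrow> cpt \<Rightarrow> real" where
  "Nfun wm wp z = wm * cmod (fst z) ^ 2 + wp * cmod (snd z) ^ 2"

definition Hbar4coef :: "(midx \<Rightarrow> complex) \<Rightarrow> midx \<Rightarrow> complex" where
  "Hbar4coef Gc ab = (if fst ab = snd ab then Gc ab else 0)"

definition Ghatcoef :: "(midx \<Rightarrow> complex) \<Rightarrow> midx \<Rightarrow> complex" where
  "Ghatcoef Gc ab = Gc ab - Hbar4coef Gc ab"

definition Hbar4 :: "(midx \<Rightarrow> complex) \<Rightarrow> cpt \<Rightarrow> complex" where
  "Hbar4 Gc z = (\<Sum>a\<in>{(a1,a2). a1 + a2 = (2::nat)}.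
      Gc (a,a) * of_real (cmod (fst z) ^ (2 * fst a) * cmod (snd z) ^ (2 * snd a)))"

end

theory Submission
  imports Defs
begin


lemma infinite_unit_circle: "infinite {w::complex. cmod w = 1}"
proof
  assume fin: "finite {w::complex. cmod w = 1}"
  have "cis ` {0..pi} \<subseteq> {w. cmod w = 1}" by auto
  hence "finite (cis ` {0..pi})" using fin finite_subset by blast
  moreover have "inj_on cis {0..pi}"
  proof (rule inj_onI)
    fix x y assume "x \<in> {0..pi}" "y \<in> {0..pi}" "cis x = cis y"
    then show "x = y" using cos_inj_pi[of x y] by (metis atLeastAtMost_iff cis.sel(1))
  qed
  ultimately have "finite {0..pi}" using finite_imageD by blast
  thus False using pi_gt_zero infinite_Icc by blast
qed

lemma poly_inf_roots_zero:
  fixes d :: "nat \<Rightarrow> complex"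
  assumes inf: "infinite A" and h: "\<And>w. w \<in> A \<Longrightarrow> (\<Sum>i\<le>n. d i * w^i) = 0"
  shows "\<forall>i\<le>n. d i = 0"
proof (rule ccontr)
  assume "\<not> (\<forall>i\<le>n. d i = 0)"
  then have "finite {x. (\<Sum>i\<le>n. d i * x^i) = 0}" using polyfun_finite_roots by blast
  moreover have "A \<subseteq> {x. (\<Sum>i\<le>n. d i * x^i) = 0}" using h by auto
  ultimately show False using inf finite_subset by blast
qed

lemma L1:
  fixes c :: "nat \<Rightarrow> nat \<Rightarrow> complex"
  assumes h: "\<And>z. (\<Sum>a\<le>N. \<Sum>b\<le>N. c a b * z^a * cnj z^b) = 0"
  shows "a \<le> N \<Longrightarrow> b \<le> N \<Longrightarrow> c a b = 0"
proof -
  define e where "e m u = (\<Sum>a\<le>N. \<Sum>b\<le>N. if a+b = m then c a b * u^a * cnj u^b else 0)" for m u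
  have step1: "(\<Sum>m\<le>2*N. e m u * (of_real t)^m) = 0" for u t
  proof -
    have "(\<Sum>m\<le>2*N. e m u * (of_real t)^m)
        = (\<Sum>m\<le>2*N. \<Sum>a\<le>N. \<Sum>b\<le>N. if a+b = m then c a b * u^a * cnj u^b * (of_real t)^m else 0)"
      unfolding e_def sum_distrib_right by (intro sum.cong refl) simp
    also have "\<dots> = (\<Sum>a\<le>N. \<Sum>m\<le>2*N. \<Sum>b\<le>N. if a+b = m then c a b * u^a * cnj u^b * (of_real t)^m else 0)"
      by (rule sum.swap)
    also have "\<dots> = (\<Sum>a\<le>N. \<Sum>b\<le>N. \<Sum>m\<le>2*N. if a+b = m then c a b * u^a * cnj u^b * (of_real t)^m else 0)"
      by (rule sum.cong[OF refl]) (rule sum.swap)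
    also have "\<dots> = (\<Sum>a\<le>N. \<Sum>b\<le>N. c a b * u^a * cnj u^b * (of_real t)^(a+b))"
      by (intro sum.cong refl) (simp add: sum.delta')
    also have "\<dots> = (\<Sum>a\<le>N. \<Sum>b\<le>N. c a b * (of_real t * u)^a * cnj (of_real t * u)^b)"
      by (intro sum.cong refl) (simp add: power_mult_distrib power_add)
    also have "\<dots> = 0" by (rule h)
    finally show ?thesis .
  qed
  have step2: "\<forall>m\<le>2*N. e m u = 0" for u
  proof -
    have "infinite (range (of_real :: real \<Rightarrow> complex))"
      using finite_imageD[of "of_real :: real \<Rightarrow> complex" UNIV] inj_of_real infinite_UNIV_char_0 by blast
    then show ?thesis
      by (rule poly_inf_roots_zero[where d="\<lambda>m. e m u"]) (use step1 in auto)
  qed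
  have step3: "u^m * e m u = (\<Sum>a\<le>N. (if a \<le> m \<and> m - a \<le> N then c a (m-a) else 0) * (u^2)^a)"
    if u: "cmod u = 1" for u m
  proof -
    have uc: "u * cnj u = 1" using u by (metis complex_norm_square mult.right_neutral of_real_1 power_one)
    have "u^m * e m u = (\<Sum>a\<le>N. \<Sum>b\<le>N. if b = m - a \<and> a \<le> m then c a b * (u^2)^a else 0)"
      unfolding e_def sum_distrib_left
    proof (intro sum.cong refl)
      fix a b assume "a \<in> {..N}" "b \<in> {..N}"
      show "u ^ m * (if a + b = m then c a b * u ^ a * cnj u ^ b else 0) =
            (if b = m - a \<and> a \<le> m then c a b * (u\<^sup>2) ^ a else 0)"
      proof (cases "a + b = m")
        case True
        have "u ^ m * (c a b * u ^ a * cnj u ^ b) = c a b * u^(2*a) * (u * cnj u)^b"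
          unfolding True[symmetric] power_add power_mult_distrib mult_2 by (simp add: ac_simps)
        then have "u ^ m * (c a b * u ^ a * cnj u ^ b) = c a b * (u^2)^a" using uc by (simp add: power_mult)
        moreover have "b = m - a \<and> a \<le> m" using True by auto
        ultimately show ?thesis using True by simp
      qed auto
    qed
    also have "\<dots> = (\<Sum>a\<le>N. (if a \<le> m \<and> m - a \<le> N then c a (m-a) else 0) * (u^2)^a)"
      by (intro sum.cong refl) (auto simp: sum.delta' if_distrib)
    finally show ?thesis .
  qed
  assume a: "a \<le> N" and b: "b \<le> N"
  define m where "m = a + b"
  have "\<forall>i\<le>N. (if i \<le> m \<and> m - i \<le> N then c i (m-i) else 0) = 0"
  proof (rule poly_inf_roots_zero[OF infinite_unit_circle])
    fix w :: complex assume "w \<in> {w. cmod w = 1}"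
    then have w: "cmod w = 1" by simp
    define u where "u = csqrt w"
    have u1: "cmod u = 1" using w by (simp add: u_def)
    have "m \<le> 2*N" using a b m_def by simp
    then have e0: "e m u = 0" using step2 by simp
    have "u^2 = w" by (simp add: u_def)
    then show "(\<Sum>i\<le>N. (if i \<le> m \<and> m - i \<le> N then c i (m-i) else 0) * w^i) = 0"
      using step3[OF u1, of m] e0 by simp
  qed
  then show "c a b = 0" using a b m_def by (metis add_diff_cancel_left' le_add1)
qed


lemma idx4_sub: "idx4 \<subseteq> ({..4}\<times>{..4})\<times>({..4}\<times>{..4})"
  by (auto simp: idx4_def)
lemma finite_idx4[simp]: "finite idx4"
  using idx4_sub by (rule finite_subset) auto

lemma sum_prod2: "finite X \<Longrightarrow> finite Y \<Longrightarrow> (\<Sum>p\<in>X\<times>Y. g p) = (\<Sum>x\<in>X. \<Sum>y\<in>Y. g (x,y))"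
  by (simp add: sum.cartesian_product)

lemma box_sum:
  fixes g :: "(nat\<times>nat)\<times>(nat\<times>nat) \<Rightarrow> complex"
  shows "(\<Sum>p\<in>({..4::nat}\<times>{..4::nat})\<times>({..4::nat}\<times>{..4::nat}). g p)
     = (\<Sum>a1\<le>4. \<Sum>b1\<le>4. \<Sum>a2\<le>4. \<Sum>b2\<le>4. g ((a1,a2),(b1,b2)))"
proof -
  have "(\<Sum>p\<in>({..4::nat}\<times>{..4::nat})\<times>({..4::nat}\<times>{..4::nat}). g p)
     = (\<Sum>a1\<le>4. \<Sum>a2\<le>4. \<Sum>b1\<le>4. \<Sum>b2\<le>4. g ((a1,a2),(b1,b2)))"
    by (simp add: sum_prod2)
  also have "\<dots> = (\<Sum>a1\<le>4. \<Sum>b1\<le>4. \<Sum>a2\<le>4. \<Sum>b2\<le>4. g ((a1,a2),(b1,b2)))"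
    by (rule sum.cong[OF refl]) (rule sum.swap)
  finally show ?thesis .
qed

lemma poly4_nested:
  "poly4 D z = (\<Sum>a1\<le>4. \<Sum>b1\<le>4.
     (\<Sum>a2\<le>4. \<Sum>b2\<le>4. (if a1+a2+b1+b2 = 4 then D((a1,a2),(b1,b2)) else 0) * snd z^a2 * cnj (snd z)^b2)
       * fst z^a1 * cnj (fst z)^b1)"
proof -
  let ?g = "\<lambda>p::(nat\<times>nat)\<times>(nat\<times>nat). (if p \<in> idx4 then D p * mono z (fst p) * mono (cnj2 z) (snd p) else 0)"
  have "poly4 D z = (\<Sum>p\<in>idx4. D p * mono z (fst p) * mono (cnj2 z) (snd p))"
    unfolding poly4_def by (simp add: split_def)
  also have "\<dots> = (\<Sum>p\<in>({..4::nat}\<times>{..4::nat})\<times>({..4::nat}\<times>{..4::nat}). ?g p)"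
    by (rule sum.mono_neutral_cong_left) (use idx4_sub in auto)
  also have "\<dots> = (\<Sum>a1\<le>4. \<Sum>b1\<le>4. \<Sum>a2\<le>4. \<Sum>b2\<le>4. ?g ((a1,a2),(b1,b2)))"
    by (rule box_sum)
  also have "\<dots> = (\<Sum>a1\<le>4. \<Sum>b1\<le>4.
     (\<Sum>a2\<le>4. \<Sum>b2\<le>4. (if a1+a2+b1+b2 = 4 then D((a1,a2),(b1,b2)) else 0) * snd z^a2 * cnj (snd z)^b2)
       * fst z^a1 * cnj (fst z)^b1)"
    unfolding sum_distrib_right
    by (intro sum.cong refl) (auto simp: idx4_def Defs.mono_def cnj2_def)
  finally show ?thesis .
qed

lemma poly4_unique:
  assumes h: "\<And>z. poly4 D z = 0" and p: "p \<in> idx4"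
  shows "D p = 0"
proof -
  define E where "E a1 b1 a2 b2 = (if a1+a2+b1+b2 = 4 then D((a1,a2),(b1,b2)) else 0)" for a1 b1 a2 b2
  have c0: "(\<Sum>a2\<le>4. \<Sum>b2\<le>4. E a1 b1 a2 b2 * w^a2 * cnj w^b2) = 0"
    if "a1 \<le> 4" "b1 \<le> 4" for a1 b1 w
  proof (rule L1[where N=4 and c="\<lambda>a1 b1. (\<Sum>a2\<le>4. \<Sum>b2\<le>4. E a1 b1 a2 b2 * w^a2 * cnj w^b2)"])
    fix u
    show "(\<Sum>a\<le>4. \<Sum>b\<le>4. (\<Sum>a2\<le>4. \<Sum>b2\<le>4. E a b a2 b2 * w^a2 * cnj w^b2) * u^a * cnj u^b) = 0"
      using h[of "(u,w)"] unfolding poly4_nested E_def by simp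
  qed (use that in auto)
  obtain a1 a2 b1 b2 where pe: "p = ((a1,a2),(b1,b2))" by (metis prod.collapse)
  have le: "a1 \<le> 4" "a2 \<le> 4" "b1 \<le> 4" "b2 \<le> 4" and s4: "a1+a2+b1+b2 = 4"
    using p pe by (auto simp: idx4_def)
  have "E a1 b1 a2 b2 = 0"
    by (rule L1[where N=4 and c="E a1 b1"]) (use c0 le in auto)
  then show ?thesis using s4 pe by (simp add: E_def)
qed



definition symm :: "(midx \<Rightarrow> complex) \<Rightarrow> bool" where
  "symm P \<longleftrightarrow> (\<forall>a b. (a,b) \<in> idx4 \<longrightarrow> P (b,a) = cnj (P (a,b)))"

lemma swap_idx4: "(a,b) \<in> idx4 \<longleftrightarrow> (b,a) \<in> idx4"
  by (auto simp: idx4_def)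

lemma sum_swap_idx4: "(\<Sum>(a,b)\<in>idx4. f a b) = (\<Sum>(a,b)\<in>idx4. f b a)"
  by (rule sum.reindex_bij_witness[where i="\<lambda>(a,b). (b,a)" and j="\<lambda>(a,b). (b,a)"])
     (auto simp: swap_idx4)

lemma cnj2_cnj2[simp]: "cnj2 (cnj2 z) = z"
  by (simp add: cnj2_def)

lemma cnj_mono: "cnj (mono z a) = mono (cnj2 z) a" "cnj (mono (cnj2 z) a) = mono z a"
  by (simp_all add: Defs.mono_def cnj2_def)

lemma cnj_poly4: "cnj (poly4 P z) = poly4 (\<lambda>(a,b). cnj (P (b,a))) z"
proof -
  have "cnj (poly4 P z) = (\<Sum>(a,b)\<in>idx4. cnj (P (a,b)) * mono (cnj2 z) a * mono z b)"
    unfolding poly4_def by (simp add: case_prod_beta cnj_mono)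
  also have "\<dots> = (\<Sum>(a,b)\<in>idx4. cnj (P (b,a)) * mono (cnj2 z) b * mono z a)"
    by (rule sum_swap_idx4)
  also have "\<dots> = poly4 (\<lambda>(a,b). cnj (P (b,a))) z"
    unfolding poly4_def by (intro sum.cong refl) auto
  finally show ?thesis .
qed

lemma poly4_diff: "poly4 (\<lambda>p. P p - Q p) z = poly4 P z - poly4 Q z"
  unfolding poly4_def by (simp add: case_prod_beta algebra_simps sum_subtractf)

lemma poly4_add: "poly4 (\<lambda>p. P p + Q p) z = poly4 P z + poly4 Q z"
  unfolding poly4_def by (simp add: case_prod_beta algebra_simps sum.distrib)

lemma Gfun_real: "cnj (Gfun M3 N3 p1m p1p p2m p2p wm wp z) = Gfun M3 N3 p1m p1p p2m p2p wm wp z"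
  unfolding Gfun_def fquart_def by (simp add: add.commute)

lemma symm_from_real:
  assumes h: "\<And>z. cnj (poly4 P z) = poly4 P z"
  shows "symm P"
  unfolding symm_def
proof (intro allI impI)
  fix a b assume ab: "(a,b) \<in> idx4"
  have "poly4 (\<lambda>p. P p - (\<lambda>(a,b). cnj (P (b,a))) p) z = 0" for z
    unfolding poly4_diff cnj_poly4[symmetric] h by simp
  from poly4_unique[OF this, of "(b,a)"] ab swap_idx4
  show "P (b, a) = cnj (P (a, b))" by auto
qed



lemma symmD: "symm P \<Longrightarrow> (a,b) \<in> idx4 \<Longrightarrow> P (b,a) = cnj (P (a,b))"
  unfolding symm_def by blast

lemma znorm_nonneg: "0 \<le> znorm z"
  by (simp add: znorm_def le_max_iff_disj)

lemma symm_Scoef: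
  assumes "symm Gc"
  shows "symm (Scoef wm wp Gc)"
  unfolding symm_def
proof (intro allI impI)
  fix a b assume ab: "(a,b) \<in> idx4"
  have g: "Gc (b,a) = cnj (Gc (a,b))" using assms ab by (rule symmD)
  have d: "wm * (real (fst b) - real (fst a)) + wp * (real (snd b) - real (snd a))
        = - (wm * (real (fst a) - real (fst b)) + wp * (real (snd a) - real (snd b)))"
    by (simp add: algebra_simps)
  define D where "D = wm * (real (fst a) - real (fst b)) + wp * (real (snd a) - real (snd b))"
  show "Scoef wm wp Gc (b, a) = cnj (Scoef wm wp Gc (a, b))"
  proof (cases "a = b")
    case False
    have "Scoef wm wp Gc (b,a) = \<i> * Gc(b,a) / complex_of_real (wm * (real (fst b) - real (fst a)) + wp * (real (snd b) - real (snd a)))"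
      using False by (simp add: Scoef_def)
    then have 1: "Scoef wm wp Gc (b, a) = \<i> * cnj (Gc (a,b)) / complex_of_real (- D)"
      by (simp only: g d D_def)
    have 2: "cnj (Scoef wm wp Gc (a, b)) = - \<i> * cnj (Gc (a,b)) / complex_of_real D"
      unfolding Scoef_def using False by (simp add: D_def)
    show ?thesis unfolding 1 2 by simp
  qed (simp add: Scoef_def)
qed

lemma symm_Hbar4coef: assumes "symm Gc" shows "symm (Hbar4coef Gc)"
  unfolding symm_def
proof (intro allI impI)
  fix a b assume ab: "(a,b) \<in> idx4"
  show "Hbar4coef Gc (b, a) = cnj (Hbar4coef Gc (a, b))"
    using symmD[OF assms ab] by (cases "a = b") (simp_all add: Hbar4coef_def)
qed

lemma symm_Ghatcoef: assumes "symm Gc" shows "symm (Ghatcoef Gc)"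
  unfolding symm_def
proof (intro allI impI)
  fix a b assume ab: "(a,b) \<in> idx4"
  show "Ghatcoef Gc (b, a) = cnj (Ghatcoef Gc (a, b))"
    using symmD[OF assms ab] by (cases "a = b") (simp_all add: Ghatcoef_def Hbar4coef_def)
qed

lemma cnj_dzbar:
  assumes "symm P"
  shows "cnj (dzbar P j z) = dz P j z"
proof -
  have "cnj (dzbar P j z) = (\<Sum>(a,b)\<in>idx4. cnj (P (a,b)) * of_nat (comp b j) * mono (cnj2 z) a * mono z (dec b j))"
    unfolding dzbar_def by (simp add: case_prod_beta cnj_mono)
  also have "\<dots> = (\<Sum>(a,b)\<in>idx4. cnj (P (b,a)) * of_nat (comp a j) * mono (cnj2 z) b * mono z (dec a j))"
    by (rule sum_swap_idx4[where f="\<lambda>a b. cnj (P (a,b)) * of_nat (comp b j) * mono (cnj2 z) a * mono z (dec b j)"])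
  also have "\<dots> = dz P j z"
    unfolding dz_def
  proof (intro sum.cong refl)
    fix p assume "p \<in> idx4"
    then obtain a b where p: "p = (a,b)" "(a,b) \<in> idx4" by (metis prod.collapse)
    then have "P (a,b) = cnj (P (b,a))" using symmD[OF assms, of b a] swap_idx4 by simp
    then show "(case p of (a, b) \<Rightarrow> cnj (P (b, a)) * of_nat (comp a j) * mono (cnj2 z) b * mono z (dec a j)) =
       (case p of (a, b) \<Rightarrow> P (a, b) * of_nat (comp a j) * mono z (dec a j) * mono (cnj2 z) b)"
      using p by simp
  qed
  finally show ?thesis .
qed

definition pnormb :: "(midx \<Rightarrow> complex) \<Rightarrow> nat \<Rightarrow> real" where
  "pnormb P j = (\<Sum>(a,b)\<in>idx4. real (comp b j) * cmod (P (a,b)))"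

lemma pnormb_eq:
  assumes "symm P"
  shows "pnormb P j = pnorm P j"
proof -
  have "pnormb P j = (\<Sum>(a,b)\<in>idx4. real (comp a j) * cmod (P (b,a)))"
    unfolding pnormb_def by (rule sum_swap_idx4[where f="\<lambda>a b. real (comp b j) * cmod (P (a,b))"])
  also have "\<dots> = pnorm P j"
    unfolding pnorm_def
  proof (intro sum.cong refl)
    fix p assume "p \<in> idx4"
    then obtain a b where p: "p = (a,b)" "(a,b) \<in> idx4" by (metis prod.collapse)
    then have "P (b,a) = cnj (P (a,b))" using symmD[OF assms] by simp
    then show "(case p of (a, b) \<Rightarrow> real (comp a j) * cmod (P (b, a))) =
      (case p of (a, b) \<Rightarrow> real (comp a j) * cmod (P (a, b)))" using p by simp
  qed
  finally show ?thesis .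
qed

lemma znorm_cnj2[simp]: "znorm (cnj2 z) = znorm z"
  by (simp add: znorm_def cnj2_def)

lemma mono_bound:
  assumes "znorm z \<le> r"
  shows "cmod (mono z a) \<le> r^(fst a + snd a)"
proof -
  have 1: "cmod (fst z) \<le> r" "cmod (snd z) \<le> r" using assms by (auto simp: znorm_def)
  have r0: "0 \<le> r" using assms znorm_nonneg order_trans by blast
  have "cmod (mono z a) = cmod (fst z)^fst a * cmod (snd z)^snd a"
    by (simp add: Defs.mono_def norm_mult norm_power)
  also have "\<dots> \<le> r^fst a * r^snd a"
    by (intro mult_mono power_mono) (use 1 r0 in auto)
  finally show ?thesis by (simp add: power_add)
qed

lemma mono_pair_bound:
  assumes "znorm z \<le> r" "(a,b) \<in> idx4" "comp a j \<ge> 1"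
  shows "cmod (mono z (dec a j) * mono (cnj2 z) b) \<le> r^3"
proof -
  have "cmod (mono z (dec a j) * mono (cnj2 z) b) \<le> r^(fst (dec a j) + snd (dec a j)) * r^(fst b + snd b)"
    unfolding norm_mult
    by (intro mult_mono mono_bound) (use assms znorm_nonneg[of z] in auto)
  also have "fst (dec a j) + snd (dec a j) + (fst b + snd b) = 3"
    using assms by (cases a, cases b) (auto simp: idx4_def dec_def Defs.comp_def split: if_splits)
  then have "r^(fst (dec a j) + snd (dec a j)) * r^(fst b + snd b) = r^3"
    by (metis power_add)
  finally show ?thesis .
qed

lemma mono_pair_bound':
  assumes "znorm z \<le> r" "(a,b) \<in> idx4" "comp b j \<ge> 1"
  shows "cmod (mono z a * mono (cnj2 z) (dec b j)) \<le> r^3"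
proof -
  have "cmod (mono z a * mono (cnj2 z) (dec b j)) \<le> r^(fst a + snd a) * r^(fst (dec b j) + snd (dec b j))"
    unfolding norm_mult
    by (intro mult_mono mono_bound) (use assms znorm_nonneg[of z] in auto)
  also have "fst a + snd a + (fst (dec b j) + snd (dec b j)) = 3"
    using assms by (cases a, cases b) (auto simp: idx4_def dec_def Defs.comp_def split: if_splits)
  then have "r^(fst a + snd a) * r^(fst (dec b j) + snd (dec b j)) = r^3"
    by (metis power_add)
  finally show ?thesis .
qed

lemma dz_bound:
  assumes "znorm z \<le> r"
  shows "cmod (dz P j z) \<le> pnorm P j * r^3"
proof -
  have "cmod (dz P j z) \<le> (\<Sum>(a,b)\<in>idx4. cmod (P (a,b) * of_nat (comp a j) * mono z (dec a j) * mono (cnj2 z) b))"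
    unfolding dz_def case_prod_beta by (rule norm_sum)
  also have "\<dots> \<le> (\<Sum>(a,b)\<in>idx4. real (comp a j) * cmod (P (a,b)) * r^3)"
  proof (intro sum_mono)
    fix p assume "p \<in> idx4"
    then obtain a b where p: "p = (a,b)" "(a,b) \<in> idx4" by (metis prod.collapse)
    show "(case p of (a, b) \<Rightarrow> cmod (P (a, b) * of_nat (comp a j) * mono z (dec a j) * mono (cnj2 z) b))
       \<le> (case p of (a, b) \<Rightarrow> real (comp a j) * cmod (P (a, b)) * r ^ 3)"
    proof (cases "comp a j = 0")
      case False
      have "cmod (P (a, b) * of_nat (comp a j) * mono z (dec a j) * mono (cnj2 z) b)
          = real (comp a j) * cmod (P (a, b)) * cmod (mono z (dec a j) * mono (cnj2 z) b)"
        by (simp add: norm_mult)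
      also have "\<dots> \<le> real (comp a j) * cmod (P (a, b)) * r^3"
        by (intro mult_left_mono mono_pair_bound) (use assms p False in auto)
      finally show ?thesis using p by simp
    qed (use p in simp)
  qed
  also have "\<dots> = pnorm P j * r^3"
    unfolding pnorm_def sum_distrib_right by (simp add: case_prod_beta)
  finally show ?thesis .
qed

lemma dzbar_bound:
  assumes "znorm z \<le> r"
  shows "cmod (dzbar P j z) \<le> pnormb P j * r^3"
proof -
  have "cmod (dzbar P j z) \<le> (\<Sum>(a,b)\<in>idx4. cmod (P (a,b) * of_nat (comp b j) * mono z a * mono (cnj2 z) (dec b j)))"
    unfolding dzbar_def case_prod_beta by (rule norm_sum)
  also have "\<dots> \<le> (\<Sum>(a,b)\<in>idx4. real (comp b j) * cmod (P (a,b)) * r^3)"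
  proof (intro sum_mono)
    fix p assume "p \<in> idx4"
    then obtain a b where p: "p = (a,b)" "(a,b) \<in> idx4" by (metis prod.collapse)
    show "(case p of (a, b) \<Rightarrow> cmod (P (a, b) * of_nat (comp b j) * mono z a * mono (cnj2 z) (dec b j)))
       \<le> (case p of (a, b) \<Rightarrow> real (comp b j) * cmod (P (a, b)) * r ^ 3)"
    proof (cases "comp b j = 0")
      case False
      have "cmod (P (a, b) * of_nat (comp b j) * mono z a * mono (cnj2 z) (dec b j))
          = real (comp b j) * cmod (P (a, b)) * cmod (mono z a * mono (cnj2 z) (dec b j))"
        by (simp add: norm_mult)
      also have "\<dots> \<le> real (comp b j) * cmod (P (a, b)) * r^3"
        by (intro mult_left_mono mono_pair_bound') (use assms p False in auto)
      finally show ?thesis using p by simp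
    qed (use p in simp)
  qed
  also have "\<dots> = pnormb P j * r^3"
    unfolding pnormb_def sum_distrib_right by (simp add: case_prod_beta)
  finally show ?thesis .
qed



lemma has_vd_power:
  fixes f :: "real \<Rightarrow> complex"
  assumes "(f has_vector_derivative f') (at t within T)"
  shows "((\<lambda>t. f t ^ n) has_vector_derivative (of_nat n * f t^(n-1) * f')) (at t within T)"
proof (induction n)
  case 0
  then show ?case by simp
next
  case (Suc n)
  have "((\<lambda>t. f t * f t ^ n) has_vector_derivative (f t * (of_nat n * f t^(n-1) * f') + f' * f t ^ n)) (at t within T)"
    by (rule has_vector_derivative_mult[OF assms Suc])
  moreover have "f t * (of_nat n * f t^(n-1) * f') + f' * f t ^ n = of_nat (Suc n) * f t^(Suc n - 1) * f'"
    by (cases n) (simp_all add: algebra_simps)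
  ultimately show ?case by simp
qed

lemma term_vd:
  fixes f1 f2 g1 g2 :: "real \<Rightarrow> complex"
  assumes d1: "(f1 has_vector_derivative v1) (at t within T)"
    and d2: "(f2 has_vector_derivative v2) (at t within T)"
    and d3: "(g1 has_vector_derivative w1) (at t within T)"
    and d4: "(g2 has_vector_derivative w2) (at t within T)"
  shows "((\<lambda>t. c * (f1 t^a1 * f2 t^a2) * (g1 t^b1 * g2 t^b2)) has_vector_derivative
     (c * (of_nat a1 * f1 t^(a1-1) * f2 t^a2 * v1 + of_nat a2 * f1 t^a1 * f2 t^(a2-1) * v2) * (g1 t^b1 * g2 t^b2)
      + c * (f1 t^a1 * f2 t^a2) * (of_nat b1 * g1 t^(b1-1) * g2 t^b2 * w1 + of_nat b2 * g1 t^b1 * g2 t^(b2-1) * w2))) (at t within T)"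
  apply (rule has_vector_derivative_eq_rhs)
   apply (rule has_vector_derivative_mult has_vector_derivative_const
      has_vd_power[OF d1] has_vd_power[OF d2] has_vd_power[OF d3] has_vd_power[OF d4])+
  apply (simp add: algebra_simps)
  done

lemma poly4_vd:
  assumes dx: "(x has_vector_derivative v) (at t within T)"
  shows "((\<lambda>t. poly4 P (x t)) has_vector_derivative
     (dz P 1 (x t) * fst v + dzbar P 1 (x t) * cnj (fst v) + dz P 2 (x t) * snd v + dzbar P 2 (x t) * cnj (snd v)))
     (at t within T)"
proof -
  have d1: "((\<lambda>t. fst (x t)) has_vector_derivative fst v) (at t within T)"
    by (rule bounded_linear.has_vector_derivative[OF bounded_linear_fst dx])
  have d2: "((\<lambda>t. snd (x t)) has_vector_derivative snd v) (at t within T)"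
    by (rule bounded_linear.has_vector_derivative[OF bounded_linear_snd dx])
  have d3: "((\<lambda>t. cnj (fst (x t))) has_vector_derivative cnj (fst v)) (at t within T)"
    by (rule has_vector_derivative_cnj[OF d1])
  have d4: "((\<lambda>t. cnj (snd (x t))) has_vector_derivative cnj (snd v)) (at t within T)"
    by (rule has_vector_derivative_cnj[OF d2])
  have eq: "(\<lambda>t. poly4 P (x t)) = (\<lambda>t. \<Sum>p\<in>idx4. P p * (fst (x t)^fst (fst p) * snd (x t)^snd (fst p))
        * (cnj (fst (x t))^fst (snd p) * cnj (snd (x t))^snd (snd p)))"
    unfolding poly4_def by (simp add: case_prod_beta Defs.mono_def cnj2_def)
  have "((\<lambda>t. \<Sum>p\<in>idx4. P p * (fst (x t)^fst (fst p) * snd (x t)^snd (fst p))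
        * (cnj (fst (x t))^fst (snd p) * cnj (snd (x t))^snd (snd p))) has_vector_derivative
      (\<Sum>p\<in>idx4. P p * (of_nat (fst (fst p)) * fst (x t)^(fst (fst p)-1) * snd (x t)^snd (fst p) * fst v
             + of_nat (snd (fst p)) * fst (x t)^fst (fst p) * snd (x t)^(snd (fst p)-1) * snd v)
           * (cnj (fst (x t))^fst (snd p) * cnj (snd (x t))^snd (snd p))
        + P p * (fst (x t)^fst (fst p) * snd (x t)^snd (fst p))
           * (of_nat (fst (snd p)) * cnj (fst (x t))^(fst (snd p)-1) * cnj (snd (x t))^snd (snd p) * cnj (fst v)
             + of_nat (snd (snd p)) * cnj (fst (x t))^fst (snd p) * cnj (snd (x t))^(snd (snd p)-1) * cnj (snd v))))
      (at t within T)"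
    by (rule has_vector_derivative_sum, rule term_vd[OF d1 d2 d3 d4])
  moreover have "(\<Sum>p\<in>idx4. P p * (of_nat (fst (fst p)) * fst (x t)^(fst (fst p)-1) * snd (x t)^snd (fst p) * fst v
             + of_nat (snd (fst p)) * fst (x t)^fst (fst p) * snd (x t)^(snd (fst p)-1) * snd v)
           * (cnj (fst (x t))^fst (snd p) * cnj (snd (x t))^snd (snd p))
        + P p * (fst (x t)^fst (fst p) * snd (x t)^snd (fst p))
           * (of_nat (fst (snd p)) * cnj (fst (x t))^(fst (snd p)-1) * cnj (snd (x t))^snd (snd p) * cnj (fst v)
             + of_nat (snd (snd p)) * cnj (fst (x t))^fst (snd p) * cnj (snd (x t))^(snd (snd p)-1) * cnj (snd v)))
     = dz P 1 (x t) * fst v + dzbar P 1 (x t) * cnj (fst v) + dz P 2 (x t) * snd v + dzbar P 2 (x t) * cnj (snd v)"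
    unfolding dz_def dzbar_def sum_distrib_right sum.distrib[symmetric]
    by (intro sum.cong refl) (simp add: case_prod_beta Defs.mono_def cnj2_def dec_def Defs.comp_def algebra_simps)
  ultimately show ?thesis unfolding eq by simp
qed



definition blip :: "real \<Rightarrow> (cpt \<Rightarrow> complex) \<Rightarrow> bool" where
  "blip R h \<longleftrightarrow> (\<exists>B. \<forall>u. znorm u \<le> R \<longrightarrow> cmod (h u) \<le> B) \<and>
     (\<exists>L. \<forall>u v. znorm u \<le> R \<longrightarrow> znorm v \<le> R \<longrightarrow> cmod (h u - h v) \<le> L * znorm (u - v))"

lemma znorm_diff_fst: "cmod (fst u - fst v) \<le> znorm (u - v)"
  by (simp add: znorm_def)
lemma znorm_diff_snd: "cmod (snd u - snd v) \<le> znorm (u - v)"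
  by (simp add: znorm_def)

lemma blip_const: "blip R (\<lambda>u. c)"
  unfolding blip_def
proof (intro conjI)
  show "\<exists>B. \<forall>u. znorm u \<le> R \<longrightarrow> cmod c \<le> B" by (rule exI[of _ "cmod c"]) simp
  show "\<exists>L. \<forall>u v. znorm u \<le> R \<longrightarrow> znorm v \<le> R \<longrightarrow> cmod (c - c) \<le> L * znorm (u - v)"
    by (rule exI[of _ 0]) simp
qed

lemma blip_fst: "blip R (\<lambda>u. fst u)"
  unfolding blip_def
proof (intro conjI)
  show "\<exists>B. \<forall>u. znorm u \<le> R \<longrightarrow> cmod (fst u) \<le> B"
    by (rule exI[of _ R]) (auto simp: znorm_def)
  show "\<exists>L. \<forall>u v. znorm u \<le> R \<longrightarrow> znorm v \<le> R \<longrightarrow> cmod (fst u - fst v) \<le> L * znorm (u - v)"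
    using znorm_diff_fst by (intro exI[of _ 1] allI impI) simp
qed

lemma blip_snd: "blip R (\<lambda>u. snd u)"
  unfolding blip_def
proof (intro conjI)
  show "\<exists>B. \<forall>u. znorm u \<le> R \<longrightarrow> cmod (snd u) \<le> B"
    by (rule exI[of _ R]) (auto simp: znorm_def)
  show "\<exists>L. \<forall>u v. znorm u \<le> R \<longrightarrow> znorm v \<le> R \<longrightarrow> cmod (snd u - snd v) \<le> L * znorm (u - v)"
    using znorm_diff_snd by (intro exI[of _ 1] allI impI) simp
qed

lemma blip_cnj: assumes "blip R h" shows "blip R (\<lambda>u. cnj (h u))"
proof -
  have "cnj (h u) - cnj (h v) = cnj (h u - h v)" for u v by simp
  then show ?thesis using assms unfolding blip_def by (simp only: complex_mod_cnj)
qed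

lemma blip_mult:
  assumes f: "blip R f" and g: "blip R g"
  shows "blip R (\<lambda>u. f u * g u)"
proof -
  obtain B1 L1 where B1: "\<And>u. znorm u \<le> R \<Longrightarrow> cmod (f u) \<le> B1"
    and L1: "\<And>u v. znorm u \<le> R \<Longrightarrow> znorm v \<le> R \<Longrightarrow> cmod (f u - f v) \<le> L1 * znorm (u - v)"
    using f unfolding blip_def by blast
  obtain B2 L2 where B2: "\<And>u. znorm u \<le> R \<Longrightarrow> cmod (g u) \<le> B2"
    and L2: "\<And>u v. znorm u \<le> R \<Longrightarrow> znorm v \<le> R \<Longrightarrow> cmod (g u - g v) \<le> L2 * znorm (u - v)"
    using g unfolding blip_def by blast
  have bnd: "cmod (f u * g u) \<le> \<bar>B1\<bar> * \<bar>B2\<bar>" if "znorm u \<le> R" for u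
    unfolding norm_mult
    by (rule mult_mono) (use B1[OF that] B2[OF that] in auto)
  have lip: "cmod (f u * g u - f v * g v) \<le> (\<bar>B1\<bar> * \<bar>L2\<bar> + \<bar>L1\<bar> * \<bar>B2\<bar>) * znorm (u - v)"
    if u: "znorm u \<le> R" and v: "znorm v \<le> R" for u v
  proof -
    have zn: "0 \<le> znorm (u - v)" by (rule znorm_nonneg)
    have "f u * g u - f v * g v = f u * (g u - g v) + (f u - f v) * g v" by (simp add: algebra_simps)
    then have "cmod (f u * g u - f v * g v) \<le> cmod (f u) * cmod (g u - g v) + cmod (f u - f v) * cmod (g v)"
      by (metis norm_mult norm_triangle_ineq)
    also have "\<dots> \<le> \<bar>B1\<bar> * (\<bar>L2\<bar> * znorm (u - v)) + (\<bar>L1\<bar> * znorm (u - v)) * \<bar>B2\<bar>"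
    proof (intro add_mono mult_mono)
      show "cmod (f u) \<le> \<bar>B1\<bar>" using B1[OF u] by linarith
      show "cmod (g v) \<le> \<bar>B2\<bar>" using B2[OF v] by linarith
      show "cmod (g u - g v) \<le> \<bar>L2\<bar> * znorm (u - v)"
        using L2[OF u v] zn by (meson abs_ge_self mult_right_mono order_trans)
      show "cmod (f u - f v) \<le> \<bar>L1\<bar> * znorm (u - v)"
        using L1[OF u v] zn by (meson abs_ge_self mult_right_mono order_trans)
    qed (use zn in auto)
    finally show ?thesis by (simp add: algebra_simps)
  qed
  show ?thesis unfolding blip_def using bnd lip by blast
qed

lemma blip_add:
  assumes f: "blip R f" and g: "blip R g"
  shows "blip R (\<lambda>u. f u + g u)"
proof -
  obtain B1 L1 where B1: "\<And>u. znorm u \<le> R \<Longrightarrow> cmod (f u) \<le> B1"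
    and L1: "\<And>u v. znorm u \<le> R \<Longrightarrow> znorm v \<le> R \<Longrightarrow> cmod (f u - f v) \<le> L1 * znorm (u - v)"
    using f unfolding blip_def by blast
  obtain B2 L2 where B2: "\<And>u. znorm u \<le> R \<Longrightarrow> cmod (g u) \<le> B2"
    and L2: "\<And>u v. znorm u \<le> R \<Longrightarrow> znorm v \<le> R \<Longrightarrow> cmod (g u - g v) \<le> L2 * znorm (u - v)"
    using g unfolding blip_def by blast
  have bnd: "cmod (f u + g u) \<le> B1 + B2" if "znorm u \<le> R" for u
    using B1[OF that] B2[OF that] norm_triangle_ineq[of "f u" "g u"] by linarith
  have lip: "cmod ((f u + g u) - (f v + g v)) \<le> (L1 + L2) * znorm (u - v)"
    if u: "znorm u \<le> R" and v: "znorm v \<le> R" for u v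
  proof -
    have "(f u + g u) - (f v + g v) = (f u - f v) + (g u - g v)" by simp
    then have "cmod ((f u + g u) - (f v + g v)) \<le> cmod (f u - f v) + cmod (g u - g v)"
      by (metis norm_triangle_ineq)
    then show ?thesis using L1[OF u v] L2[OF u v] by (simp add: algebra_simps)
  qed
  show ?thesis unfolding blip_def using bnd lip by blast
qed

lemma blip_sum:
  assumes "finite A" "\<And>i. i \<in> A \<Longrightarrow> blip R (f i)"
  shows "blip R (\<lambda>u. \<Sum>i\<in>A. f i u)"
  using assms
proof (induction A rule: finite_induct)
  case empty
  then show ?case using blip_const[of R 0] by simp
next
  case (insert x F)
  then show ?case using blip_add[of R "f x" "\<lambda>u. \<Sum>i\<in>F. f i u"] by simp
qed

lemma blip_power:
  assumes "blip R f"
  shows "blip R (\<lambda>u. f u ^ n)"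
proof (induction n)
  case 0
  then show ?case using blip_const[of R 1] by simp
next
  case (Suc n)
  then show ?case using blip_mult[OF assms Suc] by simp
qed

lemma blip_dzbar: "blip R (dzbar P j)"
proof -
  have eq: "dzbar P j = (\<lambda>u. \<Sum>p\<in>idx4. P p * of_nat (comp (snd p) j) * (fst u ^ fst (fst p) * snd u ^ snd (fst p))
      * (cnj (fst u) ^ fst (dec (snd p) j) * cnj (snd u) ^ snd (dec (snd p) j)))"
    unfolding dzbar_def by (simp add: fun_eq_iff case_prod_beta Defs.mono_def cnj2_def)
  show ?thesis unfolding eq
    by (intro blip_sum finite_idx4 blip_mult blip_const blip_power blip_fst blip_snd blip_cnj)
qed

lemma norm_pair_le: "norm (w::cpt) \<le> cmod (fst w) + cmod (snd w)"
  by (metis norm_Pair_le prod.collapse)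

lemma znorm_le_norm: "znorm (w::cpt) \<le> norm w"
proof -
  obtain a b where w: "w = (a,b)" by (cases w)
  show ?thesis unfolding w znorm_def using norm_fst_le[of a b] norm_snd_le[of b a] by simp
qed

lemma F_lip:
  "\<exists>L. \<forall>u v. znorm u \<le> R \<longrightarrow> znorm v \<le> R \<longrightarrow> norm (Sfield P u - Sfield P v) \<le> L * norm (u - v)"
proof -
  obtain L1 where L1: "\<And>u v. znorm u \<le> R \<Longrightarrow> znorm v \<le> R \<Longrightarrow> cmod (dzbar P 1 u - dzbar P 1 v) \<le> L1 * znorm (u - v)"
    using blip_dzbar[of R P 1] unfolding blip_def by blast
  obtain L2 where L2: "\<And>u v. znorm u \<le> R \<Longrightarrow> znorm v \<le> R \<Longrightarrow> cmod (dzbar P 2 u - dzbar P 2 v) \<le> L2 * znorm (u - v)"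
    using blip_dzbar[of R P 2] unfolding blip_def by blast
  have "norm (Sfield P u - Sfield P v) \<le> (\<bar>L1\<bar> + \<bar>L2\<bar>) * norm (u - v)"
    if u: "znorm u \<le> R" and v: "znorm v \<le> R" for u v
  proof -
    have zn: "0 \<le> znorm (u - v)" "znorm (u - v) \<le> norm (u - v)" by (rule znorm_nonneg, rule znorm_le_norm)
    have "norm (Sfield P u - Sfield P v) \<le> cmod (- \<i> * dzbar P 1 u - - \<i> * dzbar P 1 v) + cmod (- \<i> * dzbar P 2 u - - \<i> * dzbar P 2 v)"
      using norm_pair_le[of "Sfield P u - Sfield P v"] by (simp add: Sfield_def)
    also have "\<dots> = cmod (dzbar P 1 u - dzbar P 1 v) + cmod (dzbar P 2 u - dzbar P 2 v)"
      by (simp only: right_diff_distrib[symmetric] norm_mult norm_minus_cancel norm_ii mult_1)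
    also have "\<dots> \<le> \<bar>L1\<bar> * znorm (u - v) + \<bar>L2\<bar> * znorm (u - v)"
      using L1[OF u v] L2[OF u v] zn
      by (meson abs_ge_self add_mono mult_right_mono order_trans)
    also have "\<dots> \<le> (\<bar>L1\<bar> + \<bar>L2\<bar>) * norm (u - v)"
      using zn by (simp add: distrib_right[symmetric] mult_left_mono)
    finally show ?thesis .
  qed
  then show ?thesis by blast
qed

lemma cont_dzbar: "continuous_on S (dzbar P j)"
proof -
  have eq: "dzbar P j = (\<lambda>u. \<Sum>p\<in>idx4. P p * of_nat (comp (snd p) j) * (fst u ^ fst (fst p) * snd u ^ snd (fst p))
      * (cnj (fst u) ^ fst (dec (snd p) j) * cnj (snd u) ^ snd (dec (snd p) j)))"
    unfolding dzbar_def by (simp add: fun_eq_iff case_prod_beta Defs.mono_def cnj2_def)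
  show ?thesis unfolding eq by (intro continuous_intros)
qed

lemma cont_Sfield: "continuous_on S (Sfield P)"
proof -
  have eq: "Sfield P = (\<lambda>u. (- \<i> * dzbar P 1 u, - \<i> * dzbar P 2 u))"
    by (simp add: fun_eq_iff Sfield_def)
  show ?thesis unfolding eq by (intro continuous_intros cont_dzbar)
qed



lemma int_step:
  fixes f :: "real \<Rightarrow> 'a::banach"
  assumes cf: "continuous_on {0..t} f" and t0: "0 \<le> t"
    and b: "\<And>s. s \<in> {0..t} \<Longrightarrow> norm (f s) \<le> C * s^n"
  shows "norm (integral {0..t} f) \<le> C * t^(Suc n) / real (Suc n)"
proof -
  have der: "((\<lambda>s. C * s^(Suc n) / real (Suc n)) has_vector_derivative C * s^n) (at s within {0..t})" for s
  proof -
    have "((\<lambda>s. C * s^(Suc n) / real (Suc n)) has_real_derivative C * (real (Suc n) * s^(Suc n - Suc 0)) / real (Suc n)) (at s within {0..t})"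
      by (intro DERIV_cdivide DERIV_cmult DERIV_pow)
    then show ?thesis by (simp add: has_real_derivative_iff_has_vector_derivative)
  qed
  have hi: "((\<lambda>s. C * s^n) has_integral (C * t^(Suc n) / real (Suc n) - C * 0^(Suc n) / real (Suc n))) {0..t}"
    by (rule fundamental_theorem_of_calculus[OF t0]) (rule der)
  have "norm (integral {0..t} f) \<le> integral {0..t} (\<lambda>s. C * s^n)"
    by (rule integral_norm_bound_integral) (use integrable_continuous_real[OF cf] hi b in auto)
  also have "\<dots> = C * t^(Suc n) / real (Suc n)" using integral_unique[OF hi] by simp
  finally show ?thesis .
qed

lemma fact_lim: "(\<lambda>n. K^n / fact n :: real) \<longlonglongrightarrow> 0"
proof -
  have "summable (\<lambda>n. K^n /\<^sub>R fact n)" using exp_converges[of K] by (rule sums_summable)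
  then have "(\<lambda>n. K^n /\<^sub>R fact n) \<longlonglongrightarrow> 0" by (rule summable_LIMSEQ_zero)
  then show ?thesis by (simp add: divide_inverse_commute)
qed

lemma gronwall_iter:
  fixes e :: "real \<Rightarrow> real"
  assumes e0: "\<And>t. t \<in> {0..1} \<Longrightarrow> 0 \<le> e t \<and> e t \<le> M"
    and step: "\<And>n C t. (\<And>s. s \<in> {0..1} \<Longrightarrow> e s \<le> C * s^n) \<Longrightarrow> t \<in> {0..1} \<Longrightarrow> e t \<le> L * C * t^(Suc n) / real (Suc n)"
    and L0: "0 \<le> L" and t: "t \<in> {0..1}"
  shows "e t = 0"
proof -
  have ind: "\<forall>s\<in>{0..1}. e s \<le> (M * L^n / fact n) * s^n" for n
  proof (induction n)
    case 0
    then show ?case using e0 by simp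
  next
    case (Suc n)
    have "e s \<le> L * (M * L^n / fact n) * s^(Suc n) / real (Suc n)" if "s \<in> {0..1}" for s
      by (rule step) (use Suc that in auto)
    moreover have "L * (M * L^n / fact n) * s^(Suc n) / real (Suc n) = (M * L^Suc n / fact (Suc n)) * s^Suc n" for s
      by (simp add: field_simps)
    ultimately show ?case by simp
  qed
  have M0: "0 \<le> M" using e0[OF t] by linarith
  have "e t \<le> M * (L^n / fact n)" for n
  proof -
    have "e t \<le> (M * L^n / fact n) * t^n" using ind t by blast
    also have "\<dots> \<le> (M * L^n / fact n) * 1"
      by (rule mult_left_mono) (use t M0 L0 in \<open>auto intro!: power_le_one\<close>)
    finally show ?thesis by simp
  qed
  moreover have "(\<lambda>n. M * (L^n / fact n)) \<longlonglongrightarrow> M * 0"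
    by (intro tendsto_mult tendsto_const fact_lim)
  ultimately have "e t \<le> 0"
    by (intro LIMSEQ_le_const[of "\<lambda>n. M * (L^n / fact n)"]) auto
  then show ?thesis using e0[OF t] by linarith
qed

lemma flow_cont: "flow_sol P z x \<Longrightarrow> continuous_on {0..1} x"
  unfolding flow_sol_def by (intro continuous_on_vector_derivative) auto

lemma flow_repr:
  assumes fs: "flow_sol P z x" and t: "t \<in> {0..1}"
  shows "x t = z + integral {0..t} (\<lambda>s. Sfield P (x s))"
proof -
  have "((\<lambda>s. Sfield P (x s)) has_integral (x t - x 0)) {0..t}"
  proof (rule fundamental_theorem_of_calculus)
    show "0 \<le> t" using t by simp
    fix s assume s: "s \<in> {0..t}"
    then have "(x has_vector_derivative Sfield P (x s)) (at s within {0..1})"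
      using fs t unfolding flow_sol_def by auto
    then show "(x has_vector_derivative Sfield P (x s)) (at s within {0..t})"
      by (rule has_vector_derivative_within_subset) (use t in auto)
  qed
  then have "integral {0..t} (\<lambda>s. Sfield P (x s)) = x t - x 0" by (rule integral_unique)
  then show ?thesis using fs unfolding flow_sol_def by (simp add: algebra_simps)
qed

lemma cont_F_comp: "continuous_on S x \<Longrightarrow> continuous_on S (\<lambda>s. Sfield P (x s))"
  using continuous_on_compose2[OF cont_Sfield[of UNIV P], of S x] by auto

lemma bounded_on01:
  fixes x :: "real \<Rightarrow> 'a::real_normed_vector"
  assumes "continuous_on {0..1} x"
  shows "\<exists>B. \<forall>t\<in>{0..1}. norm (x t) \<le> B"
proof -
  have "compact (x ` {0..1})" by (rule compact_continuous_image[OF assms]) simp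
  then have "bounded (x ` {0..1})" by (rule compact_imp_bounded)
  then show ?thesis by (auto simp: bounded_iff)
qed

lemma flow_unique:
  assumes fx: "flow_sol P z x" and fy: "flow_sol P z y" and t: "t \<in> {0..1}"
  shows "x t = y t"
proof -
  have cx: "continuous_on {0..1} x" and cy: "continuous_on {0..1} y"
    using flow_cont[OF fx] flow_cont[OF fy] by auto
  obtain Bx where Bx: "\<And>t. t\<in>{0..1} \<Longrightarrow> norm (x t) \<le> Bx" using bounded_on01[OF cx] by blast
  obtain By where By: "\<And>t. t\<in>{0..1} \<Longrightarrow> norm (y t) \<le> By" using bounded_on01[OF cy] by blast
  define R where "R = max Bx By"
  have zx: "znorm (x t) \<le> R" if "t \<in> {0..1}" for t
    using Bx[OF that] znorm_le_norm[of "x t"] by (simp add: R_def)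
  have zy: "znorm (y t) \<le> R" if "t \<in> {0..1}" for t
    using By[OF that] znorm_le_norm[of "y t"] by (simp add: R_def)
  obtain L where L: "\<And>u v. znorm u \<le> R \<Longrightarrow> znorm v \<le> R \<Longrightarrow> norm (Sfield P u - Sfield P v) \<le> L * norm (u - v)"
    using F_lip[of R P] by blast
  have cd: "continuous_on {0..1} (\<lambda>t. x t - y t)" by (intro continuous_intros cx cy)
  obtain M where M: "\<And>t. t\<in>{0..1} \<Longrightarrow> norm (x t - y t) \<le> M" using bounded_on01[OF cd] by blast
  have "norm (x t - y t) = 0"
  proof (rule gronwall_iter[where e="\<lambda>t. norm (x t - y t)" and M=M and L="\<bar>L\<bar>"])
    show "\<And>t. t \<in> {0..1} \<Longrightarrow> 0 \<le> norm (x t - y t) \<and> norm (x t - y t) \<le> M" using M by auto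
    show "0 \<le> \<bar>L\<bar>" by simp
    show "t \<in> {0..1}" by (rule t)
    fix n :: nat and C t :: real
    assume hyp: "\<And>s. s \<in> {0..1} \<Longrightarrow> norm (x s - y s) \<le> C * s^n" and t: "t \<in> {0..1}"
    have "x t - y t = integral {0..t} (\<lambda>s. Sfield P (x s)) - integral {0..t} (\<lambda>s. Sfield P (y s))"
      using flow_repr[OF fx t] flow_repr[OF fy t] by simp
    also have "\<dots> = integral {0..t} (\<lambda>s. Sfield P (x s) - Sfield P (y s))"
    proof (rule integral_diff[symmetric])
      show "(\<lambda>s. Sfield P (x s)) integrable_on {0..t}"
        by (rule integrable_continuous_real, rule cont_F_comp, rule continuous_on_subset[OF cx]) (use t in auto)
      show "(\<lambda>s. Sfield P (y s)) integrable_on {0..t}"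
        by (rule integrable_continuous_real, rule cont_F_comp, rule continuous_on_subset[OF cy]) (use t in auto)
    qed
    finally have eq: "x t - y t = integral {0..t} (\<lambda>s. Sfield P (x s) - Sfield P (y s))" .
    have "norm (integral {0..t} (\<lambda>s. Sfield P (x s) - Sfield P (y s))) \<le> (\<bar>L\<bar> * C) * t^(Suc n) / real (Suc n)"
    proof (rule int_step)
      show "continuous_on {0..t} (\<lambda>s. Sfield P (x s) - Sfield P (y s))"
        by (intro continuous_intros cont_F_comp continuous_on_subset[OF cx] continuous_on_subset[OF cy]) (use t in auto)
      show "0 \<le> t" using t by simp
      fix s assume s: "s \<in> {0..t}"
      then have s1: "s \<in> {0..1}" using t by auto
      have "norm (Sfield P (x s) - Sfield P (y s)) \<le> L * norm (x s - y s)" by (rule L[OF zx[OF s1] zy[OF s1]])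
      also have "\<dots> \<le> \<bar>L\<bar> * norm (x s - y s)" by (simp add: mult_right_mono)
      also have "\<dots> \<le> \<bar>L\<bar> * (C * s^n)" by (rule mult_left_mono[OF hyp[OF s1]]) simp
      finally show "norm (Sfield P (x s) - Sfield P (y s)) \<le> (\<bar>L\<bar> * C) * s^n" by (simp add: mult.assoc)
    qed
    then show "norm (x t - y t) \<le> \<bar>L\<bar> * C * t^(Suc n) / real (Suc n)" using eq by simp
  qed
  then show ?thesis by simp
qed



definition clp :: "real \<Rightarrow> real" where "clp t = max 0 (min 1 t)"

lemma clp_in: "clp t \<in> {0..1}" by (simp add: clp_def)
lemma clp_id: "t \<in> {0..1} \<Longrightarrow> clp t = t" by (simp add: clp_def)
lemma clp_clp: "clp (clp t) = clp t" by (simp add: clp_def)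
lemma cont_clp: "continuous_on S clp" unfolding clp_def by (intro continuous_intros)

lemma int_fst_bound:
  fixes g :: "real \<Rightarrow> cpt"
  assumes cg: "continuous_on {0..u} g" and u: "0 \<le> u"
    and b: "\<And>s. s \<in> {0..u} \<Longrightarrow> cmod (fst (g s)) \<le> K"
  shows "cmod (fst (integral {0..u} g)) \<le> K * u"
proof -
  have "fst (integral {0..u} g) = integral {0..u} (fst \<circ> g)"
    by (rule integral_linear[symmetric]) (use integrable_continuous_real[OF cg] bounded_linear_fst in auto)
  moreover have "norm (integral {0..u} (fst \<circ> g)) \<le> K * u^(Suc 0) / real (Suc 0)"
    by (rule int_step) (use cg u b in \<open>auto intro: continuous_intros\<close>)
  ultimately show ?thesis by simp
qed

lemma int_snd_bound:
  fixes g :: "real \<Rightarrow> cpt"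
  assumes cg: "continuous_on {0..u} g" and u: "0 \<le> u"
    and b: "\<And>s. s \<in> {0..u} \<Longrightarrow> cmod (snd (g s)) \<le> K"
  shows "cmod (snd (integral {0..u} g)) \<le> K * u"
proof -
  have "snd (integral {0..u} g) = integral {0..u} (snd \<circ> g)"
    by (rule integral_linear[symmetric]) (use integrable_continuous_real[OF cg] bounded_linear_snd in auto)
  moreover have "norm (integral {0..u} (snd \<circ> g)) \<le> K * u^(Suc 0) / real (Suc 0)"
    by (rule int_step) (use cg u b in \<open>auto intro: continuous_intros\<close>)
  ultimately show ?thesis by simp
qed

lemma flow_exists:
  assumes bF: "\<And>w j. znorm w \<le> r \<Longrightarrow> cmod (dzbar P j w) \<le> K"
    and z: "znorm z + K \<le> r" and r0: "0 \<le> r"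
  shows "\<exists>x. flow_sol P z x \<and> (\<forall>t\<in>{0..1}. znorm (x t) \<le> r)"
proof -
  define Bs where "Bs = {w::cpt. znorm w \<le> r}"
  define X where "X = PiC UNIV (\<lambda>_::real. Bs)"
  have memX: "f \<in> X \<longleftrightarrow> (\<forall>t. znorm (apply_bcontfun f t) \<le> r)" for f
    unfolding X_def mem_PiC_iff Bs_def by (simp add: Pi_iff)
  define Op where "Op f = (\<lambda>t. z + integral {0..clp t} (\<lambda>s. Sfield P (apply_bcontfun f s)))" for f :: "real \<Rightarrow>\<^sub>C cpt"
  define PB where "PB f = (if f \<in> X then Bcontfun (Op f) else f)" for f
  have "znorm (0::cpt) \<le> r" using r0 by (simp add: znorm_def)
  then have K0: "0 \<le> K" using bF[of 0 1] norm_ge_zero order_trans by blast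
  have cg: "continuous_on S (\<lambda>s. Sfield P (apply_bcontfun f s))" for f :: "real \<Rightarrow>\<^sub>C cpt" and S
    by (rule cont_F_comp) simp
  have Fb1: "cmod (fst (Sfield P w)) \<le> K" if "znorm w \<le> r" for w
    using bF[OF that, of 1] by (simp add: Sfield_def norm_mult)
  have Fb2: "cmod (snd (Sfield P w)) \<le> K" if "znorm w \<le> r" for w
    using bF[OF that, of 2] by (simp add: Sfield_def norm_mult)
  have Op_clp: "Op f (clp t) = Op f t" for f t by (simp add: Op_def clp_clp)
  have Op_bound: "znorm (Op f t) \<le> r" if "f \<in> X" for f t
  proof -
    have fr: "znorm (apply_bcontfun f s) \<le> r" for s using that memX by blast
    have u: "0 \<le> clp t" using clp_in[of t] by simp
    have u1: "clp t \<le> 1" using clp_in[of t] by simp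
    have "cmod (fst (integral {0..clp t} (\<lambda>s. Sfield P (apply_bcontfun f s)))) \<le> K * clp t"
      by (rule int_fst_bound[OF cg u]) (use Fb1 fr in auto)
    also have "\<dots> \<le> K" using K0 u1 by (simp add: mult_left_le)
    finally have 1: "cmod (fst (integral {0..clp t} (\<lambda>s. Sfield P (apply_bcontfun f s)))) \<le> K" .
    have "cmod (snd (integral {0..clp t} (\<lambda>s. Sfield P (apply_bcontfun f s)))) \<le> K * clp t"
      by (rule int_snd_bound[OF cg u]) (use Fb2 fr in auto)
    also have "\<dots> \<le> K" using K0 u1 by (simp add: mult_left_le)
    finally have 2: "cmod (snd (integral {0..clp t} (\<lambda>s. Sfield P (apply_bcontfun f s)))) \<le> K" .
    have z1: "cmod (fst z) + K \<le> r" and z2: "cmod (snd z) + K \<le> r" using z by (auto simp: znorm_def)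
    show ?thesis unfolding Op_def znorm_def
      using 1 2 z1 z2 norm_triangle_ineq[of "fst z"] norm_triangle_ineq[of "snd z"]
      by (smt (verit, ccfv_SIG) fst_add max.bounded_iff snd_add)
  qed
  have Op_bc: "Op f \<in> bcontfun" if "f \<in> X" for f
  proof (rule bcontfun_normI)
    have c1: "continuous_on {0..1} (\<lambda>u. integral {0..u} (\<lambda>s. Sfield P (apply_bcontfun f s)))"
      by (rule indefinite_integral_continuous_1, rule integrable_continuous_real, rule cg)
    have "continuous_on UNIV (\<lambda>t. integral {0..clp t} (\<lambda>s. Sfield P (apply_bcontfun f s)))"
      by (rule continuous_on_compose2[OF c1 cont_clp]) (use clp_in in auto)
    then show "continuous_on UNIV (Op f)" unfolding Op_def by (intro continuous_intros)
    show "norm (Op f t) \<le> 2 * r" for t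
    proof -
      have "norm (Op f t) \<le> cmod (fst (Op f t)) + cmod (snd (Op f t))" by (rule norm_pair_le)
      also have "\<dots> \<le> r + r" using Op_bound[OF that, of t] by (intro add_mono) (auto simp: znorm_def)
      finally show ?thesis by simp
    qed
  qed
  have PB_ap: "apply_bcontfun (PB f) = Op f" if "f \<in> X" for f
    using Op_bc[OF that] that by (simp add: PB_def Bcontfun_inverse)
  have PB_X: "PB f \<in> X" if "f \<in> X" for f
    using Op_bound[OF that] PB_ap[OF that] memX by simp
  have PBn_X: "(PB ^^ n) f \<in> X" if "f \<in> X" for f n
    by (induction n) (use that PB_X in auto)
  obtain L where L: "\<And>u v. znorm u \<le> r \<Longrightarrow> znorm v \<le> r \<Longrightarrow> norm (Sfield P u - Sfield P v) \<le> L * norm (u - v)"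
    using F_lip[of r P] by blast
  define Lc where "Lc = \<bar>L\<bar>"
  have Lc0: "0 \<le> Lc" by (simp add: Lc_def)
  have Lc: "norm (Sfield P u - Sfield P v) \<le> Lc * norm (u - v)" if "znorm u \<le> r" "znorm v \<le> r" for u v
    using L[OF that] unfolding Lc_def by (smt (verit) mult_right_mono norm_ge_zero abs_ge_self)
  have Op_diff: "Op f t - Op h t = integral {0..t} (\<lambda>s. Sfield P (apply_bcontfun f s) - Sfield P (apply_bcontfun h s))"
    if "t \<in> {0..1}" for f h t
  proof -
    have "Op f t - Op h t = integral {0..t} (\<lambda>s. Sfield P (apply_bcontfun f s)) - integral {0..t} (\<lambda>s. Sfield P (apply_bcontfun h s))"
      unfolding Op_def clp_id[OF that] by simp
    also have "\<dots> = integral {0..t} (\<lambda>s. Sfield P (apply_bcontfun f s) - Sfield P (apply_bcontfun h s))"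
      by (rule integral_diff[symmetric]) (intro integrable_continuous_real cg)+
    finally show ?thesis .
  qed
  have iter: "\<forall>t\<in>{0..1}. norm (apply_bcontfun ((PB ^^ n) f) t - apply_bcontfun ((PB ^^ n) h) t) \<le> (dist f h * Lc^n / fact n) * t^n"
    if f: "f \<in> X" and h: "h \<in> X" for f h n
  proof (induction n)
    case 0
    then show ?case using dist_bounded[of f _ h] by (simp add: dist_norm)
  next
    case (Suc n)
    show ?case
    proof
      fix t :: real assume t: "t \<in> {0..1}"
      let ?f = "(PB ^^ n) f" and ?h = "(PB ^^ n) h"
      have fX: "?f \<in> X" and hX: "?h \<in> X" using PBn_X f h by auto
      have "apply_bcontfun ((PB ^^ Suc n) f) t - apply_bcontfun ((PB ^^ Suc n) h) t = Op ?f t - Op ?h t"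
        using PB_ap[OF fX] PB_ap[OF hX] by simp
      also have "\<dots> = integral {0..t} (\<lambda>s. Sfield P (apply_bcontfun ?f s) - Sfield P (apply_bcontfun ?h s))"
        by (rule Op_diff[OF t])
      finally have eq: "apply_bcontfun ((PB ^^ Suc n) f) t - apply_bcontfun ((PB ^^ Suc n) h) t
          = integral {0..t} (\<lambda>s. Sfield P (apply_bcontfun ?f s) - Sfield P (apply_bcontfun ?h s))" .
      have "norm (integral {0..t} (\<lambda>s. Sfield P (apply_bcontfun ?f s) - Sfield P (apply_bcontfun ?h s)))
          \<le> (Lc * (dist f h * Lc^n / fact n)) * t^(Suc n) / real (Suc n)"
      proof (rule int_step)
        show "continuous_on {0..t} (\<lambda>s. Sfield P (apply_bcontfun ?f s) - Sfield P (apply_bcontfun ?h s))"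
          by (intro continuous_intros cg)
        show "0 \<le> t" using t by simp
        fix s assume s: "s \<in> {0..t}"
        then have s1: "s \<in> {0..1}" using t by auto
        have "norm (Sfield P (apply_bcontfun ?f s) - Sfield P (apply_bcontfun ?h s)) \<le> Lc * norm (apply_bcontfun ?f s - apply_bcontfun ?h s)"
          by (rule Lc) (use fX hX memX in auto)
        also have "\<dots> \<le> Lc * ((dist f h * Lc^n / fact n) * s^n)"
          by (rule mult_left_mono) (use Suc s1 Lc0 in auto)
        finally show "norm (Sfield P (apply_bcontfun ?f s) - Sfield P (apply_bcontfun ?h s)) \<le> (Lc * (dist f h * Lc^n / fact n)) * s^n"
          by (simp add: mult.assoc)
      qed
      also have "(Lc * (dist f h * Lc^n / fact n)) * t^(Suc n) / real (Suc n) = (dist f h * Lc^(Suc n) / fact (Suc n)) * t^(Suc n)"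
        by (simp add: field_simps)
      finally show "norm (apply_bcontfun ((PB ^^ Suc n) f) t - apply_bcontfun ((PB ^^ Suc n) h) t) \<le> (dist f h * Lc^(Suc n) / fact (Suc n)) * t^(Suc n)"
        using eq by simp
    qed
  qed
  obtain N0 where N0: "\<And>n. n \<ge> N0 \<Longrightarrow> Lc^n / fact n < 1"
    using order_tendstoD(2)[OF fact_lim[of Lc], of 1] unfolding eventually_sequentially by auto
  define N where "N = Suc N0"
  define c where "c = Lc^N / fact N"
  have c0: "0 \<le> c" and c1: "c < 1" using N0[of N] Lc0 by (auto simp: c_def N_def)
  have QN_clp: "apply_bcontfun ((PB ^^ N) f) t = apply_bcontfun ((PB ^^ N) f) (clp t)" if "f \<in> X" for f t
  proof -
    have "(PB ^^ N) f = PB ((PB ^^ N0) f)" by (simp add: N_def)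
    then show ?thesis using PB_ap[OF PBn_X[OF that, of N0]] Op_clp by simp
  qed
  have contr: "dist ((PB ^^ N) f) ((PB ^^ N) h) \<le> c * dist f h" if f: "f \<in> X" and h: "h \<in> X" for f h
  proof (rule dist_bound)
    fix t
    have "dist (apply_bcontfun ((PB ^^ N) f) t) (apply_bcontfun ((PB ^^ N) h) t)
        = norm (apply_bcontfun ((PB ^^ N) f) (clp t) - apply_bcontfun ((PB ^^ N) h) (clp t))"
      using QN_clp[OF f] QN_clp[OF h] by (simp add: dist_norm)
    also have "\<dots> \<le> (dist f h * Lc^N / fact N) * (clp t)^N"
      using iter[OF f h, of N] clp_in by blast
    also have "\<dots> \<le> (dist f h * Lc^N / fact N) * 1"
      by (rule mult_left_mono) (use clp_in[of t] Lc0 in \<open>auto intro!: power_le_one\<close>)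
    finally show "dist (apply_bcontfun ((PB ^^ N) f) t) (apply_bcontfun ((PB ^^ N) h) t) \<le> c * dist f h"
      by (simp add: c_def mult.commute)
  qed
  have closedX: "closed X" unfolding X_def
    by (rule closed_PiC) (unfold Bs_def znorm_def max.bounded_iff Collect_conj_eq, intro closed_Int closed_Collect_le continuous_intros)
  have complX: "complete X" using closedX complete_eq_closed by blast
  have neX: "X \<noteq> {}"
  proof -
    have "const_bcontfun z \<in> X" using z K0 unfolding memX by (simp add: const_bcontfun.rep_eq)
    then show ?thesis by blast
  qed
  have QX: "(PB ^^ N) ` X \<subseteq> X" using PBn_X by blast
  obtain x where xX: "x \<in> X" and fxp: "(PB ^^ N) x = x"
    using Banach_fix[OF complX neX c0 c1 QX contr] by blast
  have uniq: "\<And>y. y \<in> X \<Longrightarrow> (PB ^^ N) y = y \<Longrightarrow> y = x"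
  proof -
    fix y assume yX: "y \<in> X" and fy: "(PB ^^ N) y = y"
    have le: "dist y x \<le> c * dist y x" using contr[OF yX xX] fy fxp by simp
    show "y = x"
    proof (rule ccontr)
      assume "y \<noteq> x"
      then have "0 < dist y x" by simp
      then have "c * dist y x < 1 * dist y x" by (rule mult_strict_right_mono[OF c1])
      then show False using le by simp
    qed
  qed
  have "(PB ^^ N) (PB x) = PB x" using fxp funpow_swap1[of PB N x] by simp
  then have PBx: "PB x = x" using uniq PB_X[OF xX] by blast
  define sol where "sol = apply_bcontfun x"
  have sol_eq: "sol t = z + integral {0..t} (\<lambda>s. Sfield P (sol s))" if "t \<in> {0..1}" for t
  proof -
    have ax: "apply_bcontfun x = Op x" using PB_ap[OF xX] PBx by simp
    have "sol t = Op x t" unfolding sol_def by (rule fun_cong[OF ax])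
    also have "\<dots> = z + integral {0..t} (\<lambda>s. Sfield P (apply_bcontfun x s))"
      unfolding Op_def clp_id[OF that] by (rule refl)
    finally show ?thesis unfolding sol_def .
  qed
  have "flow_sol P z sol"
    unfolding flow_sol_def
  proof (intro conjI ballI)
    show "sol 0 = z" using sol_eq[of 0] by simp
    fix t :: real assume t: "t \<in> {0..1}"
    have "((\<lambda>u. z + integral {0..u} (\<lambda>s. Sfield P (sol s))) has_vector_derivative (0 + Sfield P (sol t))) (at t within {0..1})"
      by (intro has_vector_derivative_add has_vector_derivative_const integral_has_vector_derivative t)
         (unfold sol_def, rule cg)
    then have d: "((\<lambda>u. z + integral {0..u} (\<lambda>s. Sfield P (sol s))) has_vector_derivative Sfield P (sol t)) (at t within {0..1})"
      by simp
    show "(sol has_vector_derivative Sfield P (sol t)) (at t within {0..1})"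
      by (rule has_vector_derivative_transform[OF t sol_eq d])
  qed
  moreover have "\<forall>t\<in>{0..1}. znorm (sol t) \<le> r" using xX memX sol_def by auto
  ultimately show ?thesis by blast
qed



lemma nonres_den:
  fixes wm wp :: real
  assumes s: "a1 + a2 + b1 + b2 = (4::nat)"
    and eq0: "wm * (real a1 - real b1) + wp * (real a2 - real b2) = 0"
    and w0: "0 < wm" and wl: "wm < wp" and nr: "wp \<noteq> 3 * wm"
  shows "a1 = b1 \<and> a2 = b2"
proof -
  define i1 where "i1 = int a1 - int b1"
  define i2 where "i2 = int a2 - int b2"
  have r1: "real a1 - real b1 = of_int i1" and r2: "real a2 - real b2 = of_int i2"
    by (simp_all add: i1_def i2_def)
  have eq: "wm * of_int i1 = - (wp * of_int i2)" using eq0 unfolding r1 r2 by linarith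
  have sum4: "\<bar>i1\<bar> + \<bar>i2\<bar> \<le> 4" using s unfolding i1_def i2_def by linarith
  have par: "even (i1 + i2)"
  proof -
    have s': "int a1 + int a2 + int b1 + int b2 = 4" using arg_cong[OF s, of int] by simp
    have "i1 + i2 = 4 - 2 * (int b1 + int b2)" using s' unfolding i1_def i2_def by presburger
    then show ?thesis by presburger
  qed
  show ?thesis
  proof (cases "i2 = 0")
    case True
    then have "i1 = 0" using eq w0 by simp
    then show ?thesis using True i1_def i2_def by simp
  next
    case False
    have ab: "wm * \<bar>of_int i1\<bar> = wp * \<bar>of_int i2\<bar>"
    proof -
      have "\<bar>wm * of_int i1\<bar> = \<bar>wp * of_int i2\<bar>" using eq by simp
      then show ?thesis using w0 wl by (simp add: abs_mult)
    qed
    have "0 < \<bar>(of_int i2::real)\<bar>" using False by simp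
    then have "wm * \<bar>of_int i2\<bar> < wp * \<bar>of_int i2\<bar>" using wl by simp
    then have "wm * \<bar>(of_int i2::real)\<bar> < wm * \<bar>of_int i1\<bar>" using ab by simp
    then have "\<bar>(of_int i2::real)\<bar> < \<bar>of_int i1\<bar>" using w0 by simp
    then have lt: "\<bar>i2\<bar> < \<bar>i1\<bar>" by (metis of_int_abs of_int_less_iff)
    have c: "\<bar>i2\<bar> = 1 \<and> \<bar>i1\<bar> = 3" using lt sum4 par False by presburger
    then have "wm * 3 = wp * 1" using ab by (metis of_int_abs of_int_1 of_int_numeral)
    then show ?thesis using nr by simp
  qed
qed

lemma zdz1: "fst w * dz P 1 w = (\<Sum>(a,b)\<in>idx4. P (a,b) * of_nat (fst a) * mono w a * mono (cnj2 w) b)"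
  unfolding dz_def sum_distrib_left
proof (intro sum.cong refl)
  fix p assume "p \<in> idx4"
  obtain a1 a2 b where p: "p = ((a1,a2),b)" by (metis prod.collapse)
  show "fst w * (case p of (a, b) \<Rightarrow> P (a, b) * of_nat (comp a 1) * mono w (dec a 1) * mono (cnj2 w) b) =
        (case p of (a, b) \<Rightarrow> P (a, b) * of_nat (fst a) * mono w a * mono (cnj2 w) b)"
    unfolding p by (cases a1) (simp_all add: Defs.comp_def dec_def Defs.mono_def)
qed

lemma zdz2: "snd w * dz P 2 w = (\<Sum>(a,b)\<in>idx4. P (a,b) * of_nat (snd a) * mono w a * mono (cnj2 w) b)"
  unfolding dz_def sum_distrib_left
proof (intro sum.cong refl)
  fix p assume "p \<in> idx4"
  obtain a1 a2 b where p: "p = ((a1,a2),b)" by (metis prod.collapse)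
  show "snd w * (case p of (a, b) \<Rightarrow> P (a, b) * of_nat (comp a 2) * mono w (dec a 2) * mono (cnj2 w) b) =
        (case p of (a, b) \<Rightarrow> P (a, b) * of_nat (snd a) * mono w a * mono (cnj2 w) b)"
    unfolding p by (cases a2) (simp_all add: Defs.comp_def dec_def Defs.mono_def)
qed

lemma zdzb1: "cnj (fst w) * dzbar P 1 w = (\<Sum>(a,b)\<in>idx4. P (a,b) * of_nat (fst b) * mono w a * mono (cnj2 w) b)"
  unfolding dzbar_def sum_distrib_left
proof (intro sum.cong refl)
  fix p assume "p \<in> idx4"
  obtain a b1 b2 where p: "p = (a,(b1,b2))" by (metis prod.collapse)
  show "cnj (fst w) * (case p of (a, b) \<Rightarrow> P (a, b) * of_nat (comp b 1) * mono w a * mono (cnj2 w) (dec b 1)) =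
        (case p of (a, b) \<Rightarrow> P (a, b) * of_nat (fst b) * mono w a * mono (cnj2 w) b)"
    unfolding p by (cases b1) (simp_all add: Defs.comp_def dec_def Defs.mono_def cnj2_def)
qed

lemma zdzb2: "cnj (snd w) * dzbar P 2 w = (\<Sum>(a,b)\<in>idx4. P (a,b) * of_nat (snd b) * mono w a * mono (cnj2 w) b)"
  unfolding dzbar_def sum_distrib_left
proof (intro sum.cong refl)
  fix p assume "p \<in> idx4"
  obtain a b1 b2 where p: "p = (a,(b1,b2))" by (metis prod.collapse)
  show "cnj (snd w) * (case p of (a, b) \<Rightarrow> P (a, b) * of_nat (comp b 2) * mono w a * mono (cnj2 w) (dec b 2)) =
        (case p of (a, b) \<Rightarrow> P (a, b) * of_nat (snd b) * mono w a * mono (cnj2 w) b)"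
    unfolding p by (cases b2) (simp_all add: Defs.comp_def dec_def Defs.mono_def cnj2_def)
qed

definition Ncx :: "real \<Rightarrow> real \<Rightarrow> cpt \<Rightarrow> complex" where
  "Ncx wm wp w = of_real wm * (fst w * cnj (fst w)) + of_real wp * (snd w * cnj (snd w))"

lemma Ncx_eq: "Ncx wm wp w = complex_of_real (Nfun wm wp w)"
  unfolding Ncx_def Nfun_def by (simp add: complex_norm_square[symmetric])

lemma homol:
  fixes w :: cpt
  assumes sG: "symm Gc" and w0: "0 < wm" and wl: "wm < wp" and nr: "wp \<noteq> 3 * wm"
  defines "v \<equiv> Sfield (Scoef wm wp Gc) w"
  shows "of_real wm * (fst v * cnj (fst w) + fst w * cnj (fst v)) + of_real wp * (snd v * cnj (snd w) + snd w * cnj (snd v))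
     = - poly4 (Ghatcoef Gc) w"
proof -
  let ?S = "Scoef wm wp Gc"
  have sS: "symm ?S" by (rule symm_Scoef[OF sG])
  have "of_real wm * (fst v * cnj (fst w) + fst w * cnj (fst v)) + of_real wp * (snd v * cnj (snd w) + snd w * cnj (snd v))
     = \<i> * (of_real wm * (fst w * dz ?S 1 w) - of_real wm * (cnj (fst w) * dzbar ?S 1 w)
          + of_real wp * (snd w * dz ?S 2 w) - of_real wp * (cnj (snd w) * dzbar ?S 2 w))"
    unfolding v_def Sfield_def using cnj_dzbar[OF sS, of 1 w] cnj_dzbar[OF sS, of 2 w]
    by (simp add: algebra_simps)
  also have "\<dots> = (\<Sum>(a,b)\<in>idx4. \<i> * ?S (a,b) * (of_real wm * (of_nat (fst a) - of_nat (fst b)) + of_real wp * (of_nat (snd a) - of_nat (snd b)))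
        * mono w a * mono (cnj2 w) b)"
    unfolding zdz1 zdz2 zdzb1 zdzb2 sum_distrib_left sum_subtractf[symmetric] sum.distrib[symmetric]
    by (intro sum.cong refl) (auto simp: algebra_simps)
  also have "\<dots> = (\<Sum>(a,b)\<in>idx4. - Ghatcoef Gc (a,b) * mono w a * mono (cnj2 w) b)"
  proof (intro sum.cong refl)
    fix p assume p: "p \<in> idx4"
    obtain a1 a2 b1 b2 where pe: "p = ((a1,a2),(b1,b2))" by (metis prod.collapse)
    have s4: "a1 + a2 + b1 + b2 = 4" using p pe by (simp add: idx4_def)
    define D where "D = wm * (real a1 - real b1) + wp * (real a2 - real b2)"
    have Dc: "of_real wm * (of_nat a1 - of_nat b1) + of_real wp * (of_nat a2 - of_nat b2) = complex_of_real D"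
      by (simp add: D_def)
    have key: "\<i> * ?S ((a1,a2),(b1,b2)) * complex_of_real D = - Ghatcoef Gc ((a1,a2),(b1,b2))"
    proof (cases "(a1,a2) = (b1,b2)")
      case True
      then show ?thesis by (simp add: Scoef_def Ghatcoef_def Hbar4coef_def)
    next
      case False
      then have D0: "D \<noteq> 0" using nonres_den[OF s4 _ w0 wl nr] by (auto simp: D_def)
      have "?S ((a1,a2),(b1,b2)) = \<i> * Gc ((a1,a2),(b1,b2)) / complex_of_real D"
        using False by (simp add: Scoef_def D_def)
      moreover have "Ghatcoef Gc ((a1,a2),(b1,b2)) = Gc ((a1,a2),(b1,b2))"
        using False by (auto simp: Ghatcoef_def Hbar4coef_def)
      ultimately show ?thesis using D0 by simp
    qed
    show "(case p of (a, b) \<Rightarrow> \<i> * ?S (a, b) * (of_real wm * (of_nat (fst a) - of_nat (fst b)) + of_real wp * (of_nat (snd a) - of_nat (snd b))) *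
             mono w a * mono (cnj2 w) b) =
          (case p of (a, b) \<Rightarrow> - Ghatcoef Gc (a, b) * mono w a * mono (cnj2 w) b)"
      unfolding pe using key Dc by simp
  qed
  also have "\<dots> = - poly4 (Ghatcoef Gc) w"
    unfolding poly4_def by (simp add: case_prod_beta sum_negf)
  finally show ?thesis .
qed



lemma pnorm_nonneg: "0 \<le> pnorm P j"
  unfolding pnorm_def by (intro sum_nonneg) auto

lemma bracket_bound:
  fixes w :: cpt
  assumes sP: "symm P" and sS: "symm S" and zw: "znorm w \<le> r"
  defines "v \<equiv> Sfield S w"
  shows "cmod (dz P 1 w * fst v + dzbar P 1 w * cnj (fst v) + dz P 2 w * snd v + dzbar P 2 w * cnj (snd v))
      \<le> 2 * (pnorm P 1 * pnorm S 1 + pnorm P 2 * pnorm S 2) * r^6"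
proof -
  have r0: "0 \<le> r" using zw znorm_nonneg order_trans by blast
  have r3: "0 \<le> r^3" using r0 by simp
  have a1: "cmod (dz P 1 w) \<le> pnorm P 1 * r^3" by (rule dz_bound[OF zw])
  have a2: "cmod (dz P 2 w) \<le> pnorm P 2 * r^3" by (rule dz_bound[OF zw])
  have b1: "cmod (dzbar P 1 w) \<le> pnorm P 1 * r^3" using dzbar_bound[OF zw, of P 1] pnormb_eq[OF sP] by simp
  have b2: "cmod (dzbar P 2 w) \<le> pnorm P 2 * r^3" using dzbar_bound[OF zw, of P 2] pnormb_eq[OF sP] by simp
  have c1: "cmod (fst v) \<le> pnorm S 1 * r^3" using dzbar_bound[OF zw, of S 1] pnormb_eq[OF sS]
    by (simp add: v_def Sfield_def norm_mult)
  have c2: "cmod (snd v) \<le> pnorm S 2 * r^3" using dzbar_bound[OF zw, of S 2] pnormb_eq[OF sS]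
    by (simp add: v_def Sfield_def norm_mult)
  have m: "cmod x * cmod y \<le> (p * r^3) * (s * r^3)" if "cmod x \<le> p * r^3" "cmod y \<le> s * r^3" for x y :: complex and p s
    by (meson mult_mono norm_ge_zero order_trans that)
  have "cmod (dz P 1 w * fst v + dzbar P 1 w * cnj (fst v) + dz P 2 w * snd v + dzbar P 2 w * cnj (snd v))
     \<le> cmod (dz P 1 w) * cmod (fst v) + cmod (dzbar P 1 w) * cmod (fst v) + cmod (dz P 2 w) * cmod (snd v) + cmod (dzbar P 2 w) * cmod (snd v)"
  proof -
    have t: "cmod (a+b+c+d) \<le> cmod a + cmod b + cmod c + cmod d" for a b c d :: complex
      using norm_triangle_ineq[of "a+b+c" d] norm_triangle_ineq[of "a+b" c] norm_triangle_ineq[of a b] by linarith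
    show ?thesis using t[of "dz P 1 w * fst v" "dzbar P 1 w * cnj (fst v)" "dz P 2 w * snd v" "dzbar P 2 w * cnj (snd v)"]
      by (simp only: norm_mult complex_mod_cnj)
  qed
  also have "\<dots> \<le> (pnorm P 1 * r^3) * (pnorm S 1 * r^3) + (pnorm P 1 * r^3) * (pnorm S 1 * r^3)
      + (pnorm P 2 * r^3) * (pnorm S 2 * r^3) + (pnorm P 2 * r^3) * (pnorm S 2 * r^3)"
    by (intro add_mono m a1 a2 b1 b2 c1 c2)
  also have "\<dots> = 2 * (pnorm P 1 * pnorm S 1 + pnorm P 2 * pnorm S 2) * r^6"
  proof -
    have r6: "r^6 = r^3 * r^3" by (simp flip: power_add)
    show ?thesis unfolding r6 by (simp add: algebra_simps)
  qed
  finally show ?thesis .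
qed

lemma Hbar4_poly4: "Hbar4 Gc w = poly4 (Hbar4coef Gc) w"
proof -
  define A2 where "A2 = {(a1,a2). a1 + a2 = (2::nat)}"
  have A2fin: "finite A2" by (rule finite_subset[of _ "{..2}\<times>{..2}"]) (auto simp: A2_def)
  define D where "D = (\<lambda>a. (a,a)) ` A2"
  have Dsub: "D \<subseteq> idx4" by (auto simp: D_def A2_def idx4_def)
  have "poly4 (Hbar4coef Gc) w = (\<Sum>p\<in>idx4. Hbar4coef Gc p * mono w (fst p) * mono (cnj2 w) (snd p))"
    unfolding poly4_def by (simp add: case_prod_beta)
  also have "\<dots> = (\<Sum>p\<in>D. Hbar4coef Gc p * mono w (fst p) * mono (cnj2 w) (snd p))"
  proof (rule sum.mono_neutral_cong_right[OF finite_idx4 Dsub])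
    show "\<forall>p\<in>idx4 - D. Hbar4coef Gc p * mono w (fst p) * mono (cnj2 w) (snd p) = 0"
    proof
      fix p assume p: "p \<in> idx4 - D"
      obtain a b where pe: "p = (a,b)" by (cases p)
      have "a \<noteq> b"
      proof
        assume "a = b"
        then have "a \<in> A2" using p pe by (cases a) (auto simp: idx4_def A2_def)
        then have "p \<in> D" using pe \<open>a = b\<close> by (auto simp: D_def)
        then show False using p by simp
      qed
      then show "Hbar4coef Gc p * mono w (fst p) * mono (cnj2 w) (snd p) = 0" by (simp add: pe Hbar4coef_def)
    qed
  qed simp
  also have "\<dots> = (\<Sum>a\<in>A2. Hbar4coef Gc (a,a) * mono w a * mono (cnj2 w) a)"
    unfolding D_def by (subst sum.reindex) (auto simp: inj_on_def)
  also have "\<dots> = Hbar4 Gc w"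
    unfolding Hbar4_def A2_def
  proof (intro sum.cong refl)
    fix a assume "a \<in> {(a1, a2). a1 + a2 = (2::nat)}"
    have e0: "u ^ k * cnj u ^ k = complex_of_real (cmod u ^ (2 * k))" for k and u :: complex
    proof -
      have "u ^ k * cnj u ^ k = (u * cnj u)^k" by (simp add: power_mult_distrib)
      also have "\<dots> = complex_of_real (cmod u ^ 2) ^ k" by (simp only: complex_norm_square)
      also have "\<dots> = complex_of_real (cmod u ^ (2 * k))" by (simp only: of_real_power power_mult)
      finally show ?thesis .
    qed
    have e1: "fst w ^ k * cnj (fst w) ^ k = complex_of_real (cmod (fst w) ^ (2 * k))" for k by (rule e0)
    have e2: "snd w ^ k * cnj (snd w) ^ k = complex_of_real (cmod (snd w) ^ (2 * k))" for k by (rule e0)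
    show "Hbar4coef Gc (a, a) * mono w a * mono (cnj2 w) a =
        Gc (a, a) * complex_of_real (cmod (fst w) ^ (2 * fst a) * cmod (snd w) ^ (2 * snd a))"
      using e1[of "fst a"] e2[of "snd a"]
      by (simp add: Hbar4coef_def Defs.mono_def cnj2_def mult_ac)
  qed
  finally show ?thesis by simp
qed

lemma Ncx_vd:
  assumes dx: "(x has_vector_derivative v) (at t within T)"
  shows "((\<lambda>t. Ncx wm wp (x t)) has_vector_derivative
     (of_real wm * (fst v * cnj (fst (x t)) + fst (x t) * cnj (fst v)) + of_real wp * (snd v * cnj (snd (x t)) + snd (x t) * cnj (snd v))))
     (at t within T)"
proof -
  have d1: "((\<lambda>t. fst (x t)) has_vector_derivative fst v) (at t within T)"
    by (rule bounded_linear.has_vector_derivative[OF bounded_linear_fst dx])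
  have d2: "((\<lambda>t. snd (x t)) has_vector_derivative snd v) (at t within T)"
    by (rule bounded_linear.has_vector_derivative[OF bounded_linear_snd dx])
  have d3: "((\<lambda>t. cnj (fst (x t))) has_vector_derivative cnj (fst v)) (at t within T)"
    by (rule has_vector_derivative_cnj[OF d1])
  have d4: "((\<lambda>t. cnj (snd (x t))) has_vector_derivative cnj (snd v)) (at t within T)"
    by (rule has_vector_derivative_cnj[OF d2])
  show ?thesis unfolding Ncx_def
    apply (rule has_vector_derivative_eq_rhs)
     apply (rule has_vector_derivative_add has_vector_derivative_mult has_vector_derivative_const d1 d2 d3 d4)+
    apply (simp add: algebra_simps)
    done
qed

lemma lie_estimate:
  assumes sG: "symm Gc" and w0: "0 < wm" and wl: "wm < wp" and nr: "wp \<noteq> 3 * wm"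
    and fs: "flow_sol (Scoef wm wp Gc) z x" and xr: "\<And>t. t \<in> {0..1} \<Longrightarrow> znorm (x t) \<le> r"
  shows "cmod (Ncx wm wp (x 1) + poly4 Gc (x 1) - Ncx wm wp z - poly4 (Hbar4coef Gc) z)
     \<le> 2 * (pnorm (Hbar4coef Gc) 1 * pnorm (Scoef wm wp Gc) 1 + pnorm (Hbar4coef Gc) 2 * pnorm (Scoef wm wp Gc) 2) * r^6
       + (2 * (pnorm (Ghatcoef Gc) 1 * pnorm (Scoef wm wp Gc) 1 + pnorm (Ghatcoef Gc) 2 * pnorm (Scoef wm wp Gc) 2) * r^6) / 2"
    (is "_ \<le> ?A + ?B / 2")
proof -
  let ?S = "Scoef wm wp Gc" and ?H = "Hbar4coef Gc" and ?G = "Ghatcoef Gc"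
  have sS: "symm ?S" by (rule symm_Scoef[OF sG])
  have sH: "symm ?H" by (rule symm_Hbar4coef[OF sG])
  have sGh: "symm ?G" by (rule symm_Ghatcoef[OF sG])
  define Dv where "Dv P t = (let v = Sfield ?S (x t) in
      dz P 1 (x t) * fst v + dzbar P 1 (x t) * cnj (fst v) + dz P 2 (x t) * snd v + dzbar P 2 (x t) * cnj (snd v))" for P t
  define phi where "phi t = Ncx wm wp (x t) + poly4 ?H (x t) + t *\<^sub>R poly4 ?G (x t)" for t
  have der: "(phi has_vector_derivative (Dv ?H t + t *\<^sub>R Dv ?G t)) (at t within {0..1})" if t: "t \<in> {0..1}" for t
  proof -
    have xd: "(x has_vector_derivative Sfield ?S (x t)) (at t within {0..1})"
      using fs t unfolding flow_sol_def by blast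
    have n: "((\<lambda>t. Ncx wm wp (x t)) has_vector_derivative - poly4 ?G (x t)) (at t within {0..1})"
      using Ncx_vd[OF xd, of wm wp] homol[OF sG w0 wl nr, of "x t"] by simp
    have h: "((\<lambda>t. poly4 ?H (x t)) has_vector_derivative Dv ?H t) (at t within {0..1})"
      using poly4_vd[OF xd, of ?H] unfolding Dv_def Let_def .
    have g: "((\<lambda>t. poly4 ?G (x t)) has_vector_derivative Dv ?G t) (at t within {0..1})"
      using poly4_vd[OF xd, of ?G] unfolding Dv_def Let_def .
    have tg: "((\<lambda>t. t *\<^sub>R poly4 ?G (x t)) has_vector_derivative (t *\<^sub>R Dv ?G t + 1 *\<^sub>R poly4 ?G (x t))) (at t within {0..1})"
      by (rule has_vector_derivative_scaleR[OF DERIV_ident g])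
    have "(phi has_vector_derivative (- poly4 ?G (x t) + Dv ?H t + (t *\<^sub>R Dv ?G t + 1 *\<^sub>R poly4 ?G (x t)))) (at t within {0..1})"
      unfolding phi_def by (intro has_vector_derivative_add n h tg)
    then show ?thesis by simp
  qed
  have hi: "((\<lambda>t. Dv ?H t + t *\<^sub>R Dv ?G t) has_integral (phi 1 - phi 0)) {0..1}"
    by (rule fundamental_theorem_of_calculus) (auto intro: der)
  have bnd: "norm (Dv ?H t + t *\<^sub>R Dv ?G t) \<le> ?A + t * ?B" if t: "t \<in> {0..1}" for t
  proof -
    have "norm (Dv ?H t + t *\<^sub>R Dv ?G t) \<le> norm (Dv ?H t) + \<bar>t\<bar> * norm (Dv ?G t)"
      by (metis norm_scaleR norm_triangle_ineq)
    also have "\<dots> \<le> ?A + t * ?B"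
    proof (rule add_mono)
      show "norm (Dv ?H t) \<le> ?A" unfolding Dv_def Let_def by (rule bracket_bound[OF sH sS xr[OF t]])
      have "norm (Dv ?G t) \<le> ?B" unfolding Dv_def Let_def by (rule bracket_bound[OF sGh sS xr[OF t]])
      then show "\<bar>t\<bar> * norm (Dv ?G t) \<le> t * ?B" using t by (simp add: mult_left_mono)
    qed
    finally show ?thesis .
  qed
  have gi: "((\<lambda>t. ?A + t * ?B) has_integral (?A + ?B / 2)) {0..1}"
  proof -
    have "((\<lambda>t. ?A + t * ?B) has_integral ((?A * 1 + ?B * 1^2 / 2) - (?A * 0 + ?B * 0^2 / 2))) {0..1}"
    proof (rule fundamental_theorem_of_calculus)
      fix t :: real assume "t \<in> {0..1}"
      have p2: "((\<lambda>t::real. t^2) has_real_derivative real 2 * t ^ (2 - Suc 0)) (at t within {0..1})" by (rule DERIV_pow)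
      have "((\<lambda>t. ?A * t + ?B * t^2 / 2) has_real_derivative (?A * 1 + ?B * (real 2 * t ^ (2 - Suc 0)) / 2)) (at t within {0..1})"
        by (intro DERIV_add DERIV_cmult DERIV_cdivide DERIV_ident p2)
      moreover have "?A * 1 + ?B * (real 2 * t ^ (2 - Suc 0)) / 2 = ?A + t * ?B" by simp
      ultimately have "((\<lambda>t. ?A * t + ?B * t^2 / 2) has_real_derivative (?A + t * ?B)) (at t within {0..1})"
        by (simp only:)
      then show "((\<lambda>t. ?A * t + ?B * t^2 / 2) has_vector_derivative (?A + t * ?B)) (at t within {0..1})"
        by (simp only: has_real_derivative_iff_has_vector_derivative)
    qed simp
    then show ?thesis by simp
  qed
  have "norm (integral {0..1} (\<lambda>t. Dv ?H t + t *\<^sub>R Dv ?G t)) \<le> integral {0..1} (\<lambda>t. ?A + t * ?B)"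
    by (rule integral_norm_bound_integral) (use hi gi bnd in auto)
  then have "norm (phi 1 - phi 0) \<le> ?A + ?B / 2"
    using integral_unique[OF hi] integral_unique[OF gi] by simp
  moreover have "phi 1 - phi 0 = Ncx wm wp (x 1) + poly4 Gc (x 1) - Ncx wm wp z - poly4 ?H z"
  proof -
    have "poly4 ?H (x 1) + poly4 ?G (x 1) = poly4 Gc (x 1)"
      using poly4_add[of ?H ?G "x 1"] by (simp add: Ghatcoef_def)
    moreover have "x 0 = z" using fs by (simp add: flow_sol_def)
    ultimately show ?thesis unfolding phi_def by (simp add: algebra_simps)
  qed
  ultimately show ?thesis by simp
qed



theorem corollary4p4:
  fixes M K Phi :: "real^2^2" and M3 N3 wm wp r \<delta> :: real
    and Gc :: "midx \<Rightarrow> complex"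
  assumes M_sym: "transpose M = M"
    and M_pd: "\<And>v. v \<noteq> 0 \<Longrightarrow> v \<bullet> (M *v v) > 0"
    and K_diag: "\<And>i j. i \<noteq> j \<Longrightarrow> K $ i $ j = 0"
    and K_pd: "\<And>i. K $ i $ i > 0"
    and w_pos: "0 < wm" and w_less: "wm < wp"
    and eig_m: "\<exists>v. v \<noteq> 0 \<and> (matrix_inv M ** K) *v v = (wm^2) *\<^sub>R v"
    and eig_p: "\<exists>v. v \<noteq> 0 \<and> (matrix_inv M ** K) *v v = (wp^2) *\<^sub>R v"
    and Phi_M: "transpose Phi ** M ** Phi = mat 1"
    and Phi_K: "transpose Phi ** K ** Phi =
                 (\<chi> i j. if i = j then (if i = 1 then wm^2 else wp^2) else 0)"
    and G_coef: "\<And>z. Gfun M3 N3 (Phi$1$1) (Phi$1$2) (Phi$2$1) (Phi$2$2) wm wp z = poly4 Gc z"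
    and nonres: "wp \<noteq> 3 * wm"
    and r_pos: "r > 0" and d_pos: "0 < \<delta>" and d_less: "\<delta> < 1"
    and small: "r^2 * pstar (Scoef wm wp Gc) \<le> 1 - \<delta>"
  shows "(\<forall>z. znorm z \<le> r \<longrightarrow> gradnorm (Scoef wm wp Gc) z \<le> (1 - \<delta>) * r)
    \<and> (\<forall>z. znorm z \<le> \<delta> * r \<longrightarrow>
          (\<exists>x. flow_sol (Scoef wm wp Gc) z x)
        \<and> (\<forall>x y. flow_sol (Scoef wm wp Gc) z x \<longrightarrow> flow_sol (Scoef wm wp Gc) z y
               \<longrightarrow> (\<forall>t\<in>{0..1}. x t = y t))
        \<and> (\<forall>x. flow_sol (Scoef wm wp Gc) z x \<longrightarrow>
              (\<forall>t\<in>{0..1}. znorm (x t) \<le> r)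
            \<and> znorm (x 1 - z) \<le> r^3 * pstar (Scoef wm wp Gc)
            \<and> cmod (complex_of_real (Nfun wm wp (x 1))
                     + Gfun M3 N3 (Phi$1$1) (Phi$1$2) (Phi$2$1) (Phi$2$2) wm wp (x 1)
                     - complex_of_real (Nfun wm wp z) - Hbar4 Gc z)
                \<le> (\<Sum>j\<in>{1,2}. pnorm (Scoef wm wp Gc) j
                      * (2 * pnorm (Hbar4coef Gc) j + pnorm (Ghatcoef Gc) j)) * r^6))"
proof -
  let ?S = "Scoef wm wp Gc"
  let ?H = "Hbar4coef Gc"
  let ?Gh = "Ghatcoef Gc"
  have sG: "symm Gc"
  proof (rule symm_from_real)
    fix w show "cnj (poly4 Gc w) = poly4 Gc w" using G_coef[of w] Gfun_real by metis
  qed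
  have sS: "symm ?S" by (rule symm_Scoef[OF sG])
  have pj: "pnorm ?S j \<le> pstar ?S" for j
  proof (cases "j = 1")
    case False
    then have "pnorm ?S j = pnorm ?S 2" by (simp add: pnorm_def Defs.comp_def)
    then show ?thesis by (simp add: pstar_def)
  qed (simp add: pstar_def)
  have r3: "0 \<le> r^3" using r_pos by simp
  have key: "pstar ?S * r^3 \<le> (1 - \<delta>) * r"
  proof -
    have "pstar ?S * r^3 = r * (r^2 * pstar ?S)" by (simp add: power3_eq_cube power2_eq_square)
    also have "\<dots> \<le> r * (1 - \<delta>)" by (rule mult_left_mono[OF small]) (use r_pos in simp)
    finally show ?thesis by (metis mult.commute)
  qed
  have bdz: "cmod (dz ?S j w) \<le> pstar ?S * r^3" if "znorm w \<le> r" for w j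
    using dz_bound[OF that, of ?S j] mult_right_mono[OF pj[of j] r3] by linarith
  have bdzb: "cmod (dzbar ?S j w) \<le> pstar ?S * r^3" if "znorm w \<le> r" for w j
  proof -
    have "pnormb ?S j * r^3 \<le> pstar ?S * r^3"
      unfolding pnormb_eq[OF sS] by (rule mult_right_mono[OF pj[of j] r3])
    then show ?thesis using dzbar_bound[OF that, of ?S j] by linarith
  qed
  have part1: "\<forall>z. znorm z \<le> r \<longrightarrow> gradnorm ?S z \<le> (1 - \<delta>) * r"
  proof (intro allI impI)
    fix z assume zz: "znorm z \<le> r"
    have "cmod (dz ?S 1 z) \<le> (1 - \<delta>) * r" "cmod (dz ?S 2 z) \<le> (1 - \<delta>) * r"
      "cmod (dzbar ?S 1 z) \<le> (1 - \<delta>) * r" "cmod (dzbar ?S 2 z) \<le> (1 - \<delta>) * r"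
      using bdz[OF zz, of 1] bdz[OF zz, of 2] bdzb[OF zz, of 1] bdzb[OF zz, of 2] key by linarith+
    then show "gradnorm ?S z \<le> (1 - \<delta>) * r"
      unfolding gradnorm_def max.bounded_iff by blast
  qed
  have part2: "(\<exists>x. flow_sol ?S z x)
        \<and> (\<forall>x y. flow_sol ?S z x \<longrightarrow> flow_sol ?S z y \<longrightarrow> (\<forall>t\<in>{0..1}. x t = y t))
        \<and> (\<forall>x. flow_sol ?S z x \<longrightarrow>
              (\<forall>t\<in>{0..1}. znorm (x t) \<le> r)
            \<and> znorm (x 1 - z) \<le> r^3 * pstar ?S
            \<and> cmod (complex_of_real (Nfun wm wp (x 1))
                     + Gfun M3 N3 (Phi$1$1) (Phi$1$2) (Phi$2$1) (Phi$2$2) wm wp (x 1)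
                     - complex_of_real (Nfun wm wp z) - Hbar4 Gc z)
                \<le> (\<Sum>j\<in>{1,2}. pnorm ?S j * (2 * pnorm ?H j + pnorm ?Gh j)) * r^6)"
    if zr: "znorm z \<le> \<delta> * r" for z
  proof -
    have bF: "cmod (dzbar ?S j w) \<le> (1 - \<delta>) * r" if "znorm w \<le> r" for w j
      using bdzb[OF that, of j] key by linarith
    have zK: "znorm z + (1 - \<delta>) * r \<le> r" using zr by (simp add: algebra_simps)
    obtain sol where fsol: "flow_sol ?S z sol" and solr: "\<forall>t\<in>{0..1}. znorm (sol t) \<le> r"
      using flow_exists[OF bF zK] r_pos by auto
    have uniq: "\<forall>x y. flow_sol ?S z x \<longrightarrow> flow_sol ?S z y \<longrightarrow> (\<forall>t\<in>{0..1}. x t = y t)"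
      using flow_unique by blast
    have third: "(\<forall>t\<in>{0..1}. znorm (x t) \<le> r)
            \<and> znorm (x 1 - z) \<le> r^3 * pstar ?S
            \<and> cmod (complex_of_real (Nfun wm wp (x 1))
                     + Gfun M3 N3 (Phi$1$1) (Phi$1$2) (Phi$2$1) (Phi$2$2) wm wp (x 1)
                     - complex_of_real (Nfun wm wp z) - Hbar4 Gc z)
                \<le> (\<Sum>j\<in>{1,2}. pnorm ?S j * (2 * pnorm ?H j + pnorm ?Gh j)) * r^6"
      if fx: "flow_sol ?S z x" for x
    proof (intro conjI)
      show xr: "\<forall>t\<in>{0..1}. znorm (x t) \<le> r"
        using flow_unique[OF fx fsol] solr by auto
      have cx: "continuous_on {0..1} (\<lambda>s. Sfield ?S (x s))"
        by (rule cont_F_comp[OF flow_cont[OF fx]])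
      have x1: "x 1 - z = integral {0..1} (\<lambda>s. Sfield ?S (x s))"
        using flow_repr[OF fx, of 1] by simp
      have "cmod (fst (integral {0..1} (\<lambda>s. Sfield ?S (x s)))) \<le> (pstar ?S * r^3) * 1"
      proof (rule int_fst_bound[OF cx])
        fix s :: real assume "s \<in> {0..1}"
        then show "cmod (fst (Sfield ?S (x s))) \<le> pstar ?S * r^3"
          using bdzb[of "x s" 1] xr by (simp add: Sfield_def norm_mult)
      qed simp
      moreover have "cmod (snd (integral {0..1} (\<lambda>s. Sfield ?S (x s)))) \<le> (pstar ?S * r^3) * 1"
      proof (rule int_snd_bound[OF cx])
        fix s :: real assume "s \<in> {0..1}"
        then show "cmod (snd (Sfield ?S (x s))) \<le> pstar ?S * r^3"
          using bdzb[of "x s" 2] xr by (simp add: Sfield_def norm_mult)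
      qed simp
      ultimately show "znorm (x 1 - z) \<le> r^3 * pstar ?S"
        unfolding x1 znorm_def by (simp add: mult.commute)
      have le: "cmod (Ncx wm wp (x 1) + poly4 Gc (x 1) - Ncx wm wp z - poly4 ?H z)
         \<le> 2 * (pnorm ?H 1 * pnorm ?S 1 + pnorm ?H 2 * pnorm ?S 2) * r^6
           + (2 * (pnorm ?Gh 1 * pnorm ?S 1 + pnorm ?Gh 2 * pnorm ?S 2) * r^6) / 2"
        by (rule lie_estimate[OF sG w_pos w_less nonres fx]) (use xr in auto)
      have e: "2 * (pnorm ?H 1 * pnorm ?S 1 + pnorm ?H 2 * pnorm ?S 2) * r^6
           + (2 * (pnorm ?Gh 1 * pnorm ?S 1 + pnorm ?Gh 2 * pnorm ?S 2) * r^6) / 2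
         = (\<Sum>j\<in>{1,2}. pnorm ?S j * (2 * pnorm ?H j + pnorm ?Gh j)) * r^6"
        by (simp add: algebra_simps)
      show "cmod (complex_of_real (Nfun wm wp (x 1))
                     + Gfun M3 N3 (Phi$1$1) (Phi$1$2) (Phi$2$1) (Phi$2$2) wm wp (x 1)
                     - complex_of_real (Nfun wm wp z) - Hbar4 Gc z)
                \<le> (\<Sum>j\<in>{1,2}. pnorm ?S j * (2 * pnorm ?H j + pnorm ?Gh j)) * r^6"
        using le unfolding e Ncx_eq G_coef Hbar4_poly4 .
    qed
    show ?thesis using fsol uniq third by blast
  qed
  show ?thesis using part1 part2 by blast
qed


end
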